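(* Let $q\ge K$. The Specialized Augmented Code protocol is a JPLT-II protocol: it satisfies the recoverability and joint privacy conditions under Model II, and its rate is $L/(K-D+L)$.
   Context: Setup. Let $q$ be a prime power, $N\ge 1$ an integer, $B=N\log_2 q$, and $1\le L\le D\le K$ integers. Let $\mathbb{W}$ be the set of all $D$-element subsets of $[K]=\{1,\dots,K\}$. Let $\mathbb{V}_I$ be the set of $L\times D$ matrices over $\mathbb{F}_q$ that are MDS (every $L\times L$ submatrix is invertible), and $\mathbb{V}_{II}$ the set of $L\times D$ matrices over $\mathbb{F}_q$ of rank $L$. A server stores messages $X_1,\dots,X_K\in\mathbb{F}_q^N$ (row vectors), which are independent and uniformly distributed; $X$ denotes the $K\times N$ matrix with rows $X_1,\dots,X_K$, and for $S\subseteq[K]$, $X_S$ is the submatrix of rows indexed by $S$ (in increasing order). For $W\in\mathbb{W}$ and an $L\times D$ matrix $V$, the demand is $Z^{[W,V]}=VX_W=UX$, where the global coefficient matrix $U$ is the $L\times K$ matrix whose columns indexed by $W$ (in increasing order) are the columns of $V$ and whose other columns are zero. The demand support $W$ is uniform on $\mathbb{W}$; the coefficient matrix $V$ is uniform on $\mathbb{V}_I$ (Model I) or on $\mathbb{V}_{II}$ (Model II); $W,V,X$ are mutually independent. The server knows $K,D,L$ and these distributions but not the realizations of $W,V$. Protocol. The user draws private randomness $R$ independent of $(W,V,X)$ and sends a query $Q=Q^{[W,V]}$ that is a function of $(W,V,R)$; the server returns an answer $A=A^{[W,V]}$ that is a deterministic function of $(Q,X)$. Recoverability: $H(Z^{[W,V]}\mid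 A,Q,W,V)=0$. Joint privacy: for every realization $\mathrm{Q}$ of the query with positive probability and every $\tilde W\in\mathbb{W}$, $\Pr(W=\tilde W\mid Q=\mathrm{Q})=1/\binom{K}{D}$. A JPLT-I (resp. JPLT-II) protocol is a protocol satisfying recoverability and joint privacy under Model I (resp. Model II). The rate of a protocol is $H(Z^{[W,V]})/H(A)=LB/H(A)$. Specialized Augmented Code protocol (Model II). Fix, independently of $(W,V)$, a $(K-D)\times K$ MDS matrix $M$ over $\mathbb{F}_q$ (every $(K-D)\times(K-D)$ submatrix invertible; e.g., a generator matrix of a $[K,K-D]$ generalized Reed–Solomon code, which exists for $q\ge K$). Given $W\in\mathbb{W}$ and $V\in\mathbb{V}_{II}$, the user forms the global coefficient matrix $U$, the $(K-D+L)\times K$ matrix $\hat G=\begin{bmatrix}U\\ M\end{bmatrix}$, draws a uniformly random invertible $(K-D+L)\times(K-D+L)$ matrix $R$ over $\mathbb{F}_q$ (independent of everything else), and sends $G=R\hat G$ as the query. The server returns $Y=GX$. The user computes $\tilde Y=R^{-1}Y$ and reads the demand $VX_W$ as the first $L$ rows of $\tilde Y$. *)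

theory Defs
  imports "Jordan_Normal_Form.DL_Rank" "Jordan_Normal_Form.DL_Submatrix"
          "HOL-Probability.Probability_Mass_Function"
begin

definition entropy2 :: "'b pmf \<Rightarrow> real" where
  "entropy2 p = - (\<Sum>x\<in>set_pmf p. pmf p x * log 2 (pmf p x))"

definition H :: "'o pmf \<Rightarrow> ('o \<Rightarrow> 'b) \<Rightarrow> real" where
  "H Omega Z = entropy2 (map_pmf Z Omega)"

definition Hc :: "'o pmf \<Rightarrow> ('o \<Rightarrow> 'b) \<Rightarrow> ('o \<Rightarrow> 'c) \<Rightarrow> real" where
  "Hc Omega Z Y =
     (\<Sum>y\<in>set_pmf (map_pmf Y Omega).
        pmf (map_pmf Y Omega) y * entropy2 (map_pmf Z (cond_pmf Omega {w. Y w = y})))"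

definition cprob :: "'o pmf \<Rightarrow> 'o set \<Rightarrow> 'o set \<Rightarrow> real" where
  "cprob Omega A B = measure_pmf.prob Omega (A \<inter> B) / measure_pmf.prob Omega B"

section \<open>Matrices over a finite field (indices are 0-based: [K] is rendered as {0..<K})\<close>

definition supports :: "nat \<Rightarrow> nat \<Rightarrow> nat set set" where
  "supports K D = {W. W \<subseteq> {0..<K} \<and> card W = D}"

definition mds_mat :: "'a :: field mat \<Rightarrow> bool" where
  "mds_mat A \<longleftrightarrow> (\<forall>S. S \<subseteq> {0..<dim_col A} \<and> card S = dim_row A \<longrightarrow>
                      invertible_mat (submatrix A {0..<dim_row A} S))"

definition coeffs_II :: "nat \<Rightarrow> nat \<Rightarrow> 'a :: field mat set" where
  "coeffs_II L D = {V \<in> carrier_mat L D. vec_space.rank L V = L}"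

text \<open>Messages: the K x N matrix X whose rows are X_1, ..., X_K.\<close>
definition messages :: "nat \<Rightarrow> nat \<Rightarrow> 'a :: field mat set" where
  "messages K N = carrier_mat K N"

definition invertibles :: "nat \<Rightarrow> 'a :: field mat set" where
  "invertibles n = {R \<in> carrier_mat n n. invertible_mat R}"

definition rows_sub :: "'a mat \<Rightarrow> nat set \<Rightarrow> 'a mat" where
  "rows_sub X S = submatrix X S {0..<dim_col X}"

text \<open>Global coefficient matrix U (L x K): columns indexed by W (increasing) are those of V,
  all other columns are zero.\<close>
definition global_coeff :: "nat \<Rightarrow> nat set \<Rightarrow> 'a :: zero mat \<Rightarrow> 'a mat" where
  "global_coeff K W V =
     Matrix.mat (dim_row V) K (\<lambda>(i,k). if k \<in> W then V $$ (i, card {w\<in>W. w < k}) else 0)"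

definition demand :: "nat set \<Rightarrow> 'a :: field mat \<Rightarrow> 'a mat \<Rightarrow> 'a mat" where
  "demand W V X = V * rows_sub X W"

text \<open>Outcomes are tuples (W, V, X, R). The query is G = R * [U; M], the answer Y = G X.\<close>
definition sac_query :: "nat \<Rightarrow> 'a :: field mat \<Rightarrow> nat set \<Rightarrow> 'a mat \<Rightarrow> 'a mat \<Rightarrow> 'a mat" where
  "sac_query K M W V R = R * (global_coeff K W V @\<^sub>r M)"

definition sac_answer :: "'a :: field mat \<Rightarrow> 'a mat \<Rightarrow> 'a mat" where
  "sac_answer G X = G * X"

definition sac_space ::
  "nat \<Rightarrow> nat \<Rightarrow> nat \<Rightarrow> nat \<Rightarrow> (nat set \<times> 'a :: {finite,field} mat \<times> 'a mat \<times> 'a mat) pmf" where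
  "sac_space K D L N =
     pair_pmf (pmf_of_set (supports K D))
      (pair_pmf (pmf_of_set (coeffs_II L D))
        (pair_pmf (pmf_of_set (messages K N)) (pmf_of_set (invertibles (K - D + L)))))"

end

theory Submission
  imports Defs
begin

definition rk :: "nat set \<Rightarrow> nat \<Rightarrow> nat" where "rk S k = card {w\<in>S. w < k}"

definition sel :: "nat \<Rightarrow> nat set \<Rightarrow> 'a :: {zero,one} mat" where
  "sel K S = Matrix.mat (card S) K (\<lambda>(i,k). if k \<in> S \<and> rk S k = i then 1 else 0)"

lemma sel_carrier[simp]: "sel K S \<in> carrier_mat (card S) K"
  unfolding sel_def by auto

lemma selT_carrier[simp]: "(sel K S)\<^sup>T \<in> carrier_mat K (card S)"
  unfolding sel_def by auto

lemma rk_lt: assumes "finite S" "k \<in> S" shows "rk S k < card S"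
proof -
  have "{w\<in>S. w < k} \<subset> S" using assms by auto
  then show ?thesis unfolding rk_def using assms(1) psubset_card_mono by blast
qed

lemma pick_rk: "k \<in> S \<Longrightarrow> pick S (rk S k) = k"
  unfolding rk_def by (rule pick_card_in_set)

lemma rk_pick: "i < card S \<Longrightarrow> rk S (pick S i) = i"
  unfolding rk_def by (rule card_pick) simp

lemma pick_in: "i < card S \<Longrightarrow> pick S i \<in> S"
  by (rule pick_in_set) simp

lemma sel_iff: assumes "finite S" "i < card S"
  shows "(k \<in> S \<and> rk S k = i) \<longleftrightarrow> k = pick S i"
  using assms pick_rk rk_pick pick_in by metis

lemma pick_atLeast: assumes "j < N" shows "pick {0..<N} j = j"
proof -
  have jc: "j < card {0..<N}" using assms by simp
  have p: "pick {0..<N} j \<in> {0..<N}" by (rule pick_in[OF jc])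
  have "card {a\<in>{0..<N}. a < pick {0..<N} j} = j" by (rule card_pick) (use jc in simp)
  moreover have "{a\<in>{0..<N}. a < pick {0..<N} j} = {0..<pick {0..<N} j}" using p by auto
  ultimately show ?thesis by simp
qed

lemma sum_if_eq: assumes "p \<in> A" "finite A"
  shows "(\<Sum>k\<in>A. (if k = p then f k else 0)) = (f p :: 'b :: comm_monoid_add)"
  using assms by (simp add: sum.delta')

lemma sel_mult_rows: assumes X: "(X :: 'a :: comm_ring_1 mat) \<in> carrier_mat K N" and S: "S \<subseteq> {0..<K}"
  shows "sel K S * X = rows_sub X S"
proof -
  have fS: "finite S" using S finite_subset by blast
  have cS: "{i. i < K \<and> i \<in> S} = S" using S by auto
  have cN: "{j. j < N \<and> j \<in> {0..<N}} = {0..<N}" by auto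
  show ?thesis
  proof (rule eq_matI)
    show "dim_row (sel K S * X) = dim_row (rows_sub X S)"
      using X unfolding rows_sub_def by (simp add: dim_submatrix cS sel_def)
    show "dim_col (sel K S * X) = dim_col (rows_sub X S)"
      using X unfolding rows_sub_def by (simp add: dim_submatrix cN)
    fix i j assume i: "i < dim_row (rows_sub X S)" and j: "j < dim_col (rows_sub X S)"
    have i': "i < card S" and j': "j < N" using i j X unfolding rows_sub_def
      by (auto simp: dim_submatrix cS cN)
    have pS: "pick S i < K" using pick_in[OF i'] S by auto
    have "(sel K S * X) $$ (i,j) = (\<Sum>k\<in>{0..<K}. (if k \<in> S \<and> rk S k = i then 1 else 0) * X $$ (k,j))"
      using X i' j' by (simp add: scalar_prod_def sel_def)
    also have "\<dots> = (\<Sum>k\<in>{0..<K}. (if k = pick S i then X $$ (k,j) else 0))"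
      by (rule sum.cong) (auto simp: sel_iff[OF fS i'])
    also have "\<dots> = X $$ (pick S i, j)" using pS by (simp add: sum.delta')
    also have "\<dots> = rows_sub X S $$ (i,j)"
      unfolding rows_sub_def using X i' j'
      by (simp add: submatrix_index cS cN pick_atLeast)
    finally show "(sel K S * X) $$ (i,j) = rows_sub X S $$ (i,j)" .
  qed
qed

lemma global_coeff_sel: assumes V: "(V :: 'a :: comm_ring_1 mat) \<in> carrier_mat L D" and S: "S \<subseteq> {0..<K}" and cS: "card S = D"
  shows "global_coeff K S V = V * sel K S"
proof (rule eq_matI)
  have fS: "finite S" using S finite_subset by blast
  show "dim_row (global_coeff K S V) = dim_row (V * sel K S)" using V by (simp add: global_coeff_def)
  show "dim_col (global_coeff K S V) = dim_col (V * sel K S)" using V by (simp add: global_coeff_def sel_def)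
  fix i k assume i: "i < dim_row (V * sel K S)" and k: "k < dim_col (V * sel K S)"
  have i': "i < L" and k': "k < K" using i k V by (auto simp: sel_def)
  have "(V * sel K S) $$ (i,k) = (\<Sum>t\<in>{0..<D}. V $$ (i,t) * (if k \<in> S \<and> rk S k = t then 1 else 0))"
    using V i' k' cS by (simp add: scalar_prod_def sel_def)
  also have "\<dots> = (if k \<in> S then V $$ (i, rk S k) else 0)"
  proof (cases "k \<in> S")
    case True
    then have "rk S k \<in> {0..<D}" using rk_lt[OF fS True] cS by auto
    have "(\<Sum>t\<in>{0..<D}. V $$ (i,t) * (if k \<in> S \<and> rk S k = t then 1 else 0))
        = (\<Sum>t\<in>{0..<D}. if t = rk S k then V $$ (i,t) else 0)"
      by (rule sum.cong) (use True in auto)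
    also have "\<dots> = V $$ (i, rk S k)" using \<open>rk S k \<in> {0..<D}\<close> by (simp add: sum.delta')
    finally show ?thesis using True by simp
  qed simp
  finally show "global_coeff K S V $$ (i,k) = (V * sel K S) $$ (i,k)"
    using V i' k' by (simp add: global_coeff_def rk_def)
qed

lemma sel_selT: assumes S: "S \<subseteq> {0..<K}"
  shows "sel K S * (sel K S)\<^sup>T = (1\<^sub>m (card S) :: 'a :: comm_ring_1 mat)"
proof (rule eq_matI)
  have fS: "finite S" using S finite_subset by blast
  fix i j assume i: "i < dim_row (1\<^sub>m (card S) :: 'a mat)" and j: "j < dim_col (1\<^sub>m (card S) :: 'a mat)"
  then have i': "i < card S" and j': "j < card S" by auto
  have pS: "pick S i \<in> {0..<K}" using pick_in[OF i'] S by auto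
  have "(sel K S * (sel K S)\<^sup>T) $$ (i,j) = (\<Sum>k\<in>{0..<K}. (if k \<in> S \<and> rk S k = i then 1 else 0) * (if k \<in> S \<and> rk S k = j then 1 else (0::'a)))"
    using i' j' by (simp add: scalar_prod_def sel_def)
  also have "\<dots> = (\<Sum>k\<in>{0..<K}. (if k = pick S i then (if k = pick S j then 1 else 0) else 0))"
    by (rule sum.cong) (auto simp: sel_iff[OF fS i'] sel_iff[OF fS j'])
  also have "\<dots> = (if pick S i = pick S j then 1 else 0)" using pS by (simp add: sum.delta')
  also have "\<dots> = (if i = j then 1 else 0)" using rk_pick[OF i'] rk_pick[OF j'] by metis
  finally show "(sel K S * (sel K S)\<^sup>T) $$ (i,j) = (1\<^sub>m (card S) :: 'a mat) $$ (i,j)" using i' j' by simp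
qed (auto simp: sel_def)

lemma sel_disj: assumes "S \<inter> T = {}"
  shows "sel K S * (sel K T)\<^sup>T = (0\<^sub>m (card S) (card T) :: 'a :: comm_ring_1 mat)"
proof (rule eq_matI)
  fix i j assume i: "i < dim_row (0\<^sub>m (card S) (card T) :: 'a mat)" and j: "j < dim_col (0\<^sub>m (card S) (card T) :: 'a mat)"
  then have i': "i < card S" and j': "j < card T" by auto
  have "(sel K S * (sel K T)\<^sup>T) $$ (i,j) = (\<Sum>k\<in>{0..<K}. (if k \<in> S \<and> rk S k = i then 1 else 0) * (if k \<in> T \<and> rk T k = j then 1 else (0::'a)))"
    using i' j' by (simp add: scalar_prod_def sel_def)
  also have "\<dots> = 0" using assms by (intro sum.neutral) auto
  finally show "(sel K S * (sel K T)\<^sup>T) $$ (i,j) = (0\<^sub>m (card S) (card T) :: 'a mat) $$ (i,j)" using i' j' by simp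
qed (auto simp: sel_def)

lemma selT_sel_entry: assumes fS: "finite S" and k: "k < K" and k2: "k' < K"
  shows "((sel K S)\<^sup>T * sel K S) $$ (k,k') = (if k \<in> S \<and> k = k' then 1 else (0::'a::comm_ring_1))"
proof -
  have "((sel K S)\<^sup>T * sel K S) $$ (k,k') = (\<Sum>i\<in>{0..<card S}. (if k \<in> S \<and> rk S k = i then 1 else 0) * (if k' \<in> S \<and> rk S k' = i then 1 else (0::'a)))"
    using k k2 by (simp add: scalar_prod_def sel_def)
  also have "\<dots> = (if k \<in> S \<and> k = k' then 1 else 0)"
  proof (cases "k \<in> S")
    case True
    have r: "rk S k \<in> {0..<card S}" using rk_lt[OF fS True] by auto
    have "(\<Sum>i\<in>{0..<card S}. (if k \<in> S \<and> rk S k = i then 1 else 0) * (if k' \<in> S \<and> rk S k' = i then 1 else (0::'a)))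
       = (\<Sum>i\<in>{0..<card S}. if i = rk S k then (if k' \<in> S \<and> rk S k' = i then 1 else (0::'a)) else 0)"
      by (rule sum.cong) (use True in auto)
    also have "\<dots> = (if k' \<in> S \<and> rk S k' = rk S k then 1 else 0)" using r by (simp add: sum.delta')
    also have "\<dots> = (if k \<in> S \<and> k = k' then 1 else 0)" using True pick_rk by metis
    finally show ?thesis .
  qed simp
  finally show ?thesis .
qed

lemma sel_sum: assumes S: "S \<subseteq> {0..<K}"
  shows "(sel K S)\<^sup>T * sel K S + (sel K ({0..<K} - S))\<^sup>T * sel K ({0..<K} - S) = (1\<^sub>m K :: 'a :: comm_ring_1 mat)"
proof (rule eq_matI)
  have fS: "finite S" using S finite_subset by blast
  fix k k' assume k: "k < dim_row (1\<^sub>m K :: 'a mat)" and k2: "k' < dim_col (1\<^sub>m K :: 'a mat)"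
  then have k: "k < K" and k2: "k' < K" by auto
  show "((sel K S)\<^sup>T * sel K S + (sel K ({0..<K} - S))\<^sup>T * sel K ({0..<K} - S)) $$ (k,k') = (1\<^sub>m K :: 'a mat) $$ (k,k')"
    using k k2 selT_sel_entry[OF fS k k2, where 'a='a] selT_sel_entry[of "{0..<K} - S" k K k', where 'a='a]
    by (auto simp: sel_def)
qed (auto simp: sel_def)

lemma submatrix_sel: assumes M: "(M :: 'a :: comm_ring_1 mat) \<in> carrier_mat c K" and S: "S \<subseteq> {0..<K}"
  shows "submatrix M {0..<c} S = M * (sel K S)\<^sup>T"
proof (rule eq_matI)
  have fS: "finite S" using S finite_subset by blast
  have cS: "{i. i < K \<and> i \<in> S} = S" using S by auto
  have cc: "{j. j < c \<and> j \<in> {0..<c}} = {0..<c}" by auto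
  show "dim_row (submatrix M {0..<c} S) = dim_row (M * (sel K S)\<^sup>T)" using M by (simp add: dim_submatrix cc)
  show "dim_col (submatrix M {0..<c} S) = dim_col (M * (sel K S)\<^sup>T)" using M by (simp add: dim_submatrix cS sel_def)
  fix i t assume i: "i < dim_row (M * (sel K S)\<^sup>T)" and t: "t < dim_col (M * (sel K S)\<^sup>T)"
  have i': "i < c" and t': "t < card S" using i t M by (auto simp: sel_def)
  have pS: "pick S t \<in> {0..<K}" using pick_in[OF t'] S by auto
  have "(M * (sel K S)\<^sup>T) $$ (i,t) = (\<Sum>k\<in>{0..<K}. M $$ (i,k) * (if k \<in> S \<and> rk S k = t then 1 else 0))"
    using M i' t' by (simp add: scalar_prod_def sel_def)
  also have "\<dots> = (\<Sum>k\<in>{0..<K}. if k = pick S t then M $$ (i,k) else 0)"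
    by (rule sum.cong) (auto simp: sel_iff[OF fS t'])
  also have "\<dots> = M $$ (i, pick S t)" using pS by (simp add: sum.delta')
  finally show "submatrix M {0..<c} S $$ (i,t) = (M * (sel K S)\<^sup>T) $$ (i,t)"
    using M i' t' by (simp add: submatrix_index cS cc pick_atLeast)
qed

lemma rank_rinv:
  assumes A: "(A :: 'a :: field mat) \<in> carrier_mat L D"
  shows "vec_space.rank L A = L \<longleftrightarrow> (\<exists>Y \<in> carrier_mat D L. A * Y = 1\<^sub>m L)"
proof -
  interpret vs: vec_space "TYPE('a)" L .
  have cs: "vs.col_space A = {y\<in>carrier_vec L. \<exists>x\<in>carrier_vec D. A *\<^sub>v x = y}"
    using vs.col_space_eq[OF A] A by auto
  show ?thesis
  proof
    assume r: "vs.rank A = L"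
    obtain S where mx: "maximal S (\<lambda>T. T \<subseteq> set (cols A) \<and> vs.lin_indpt T)"
      using maximal_exists[of "(\<lambda>T. T \<subseteq> set (cols A) \<and> vs.lin_indpt T)" "card (set (cols A))" "{}"]
      by (meson List.finite_set card_mono empty_iff empty_subsetI vs.finite_lin_indpt2 rev_finite_subset)
    have "vs.rank A = card S" by (rule vs.rank_card_indpt[OF A mx])
    with r have cardS: "card S = L" by simp
    have Ssub: "S \<subseteq> set (cols A)" and li: "vs.lin_indpt S" using mx unfolding maximal_def by auto
    have Sc: "S \<subseteq> carrier_vec L" using Ssub cols_dim A by blast
    have fS: "finite S" using Ssub finite_subset by blast
    have "vs.basis S"
      by (rule vs.dim_li_is_basis) (use fS Sc li cardS vs.dim_is_n in auto)
    then have spS: "vs.span S = carrier_vec L" unfolding vs.basis_def by auto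
    have "vs.span S \<subseteq> vs.span (set (cols A))"
      by (rule vs.span_is_monotone[OF Ssub])
    then have colall: "carrier_vec L \<subseteq> vs.col_space A" unfolding vs.col_space_def spS .
    have "\<forall>i\<in>{0..<L}. \<exists>x. x \<in> carrier_vec D \<and> A *\<^sub>v x = unit_vec L i"
    proof
      fix i assume "i \<in> {0..<L}"
      then have "unit_vec L i \<in> vs.col_space A" using colall by auto
      then show "\<exists>x. x \<in> carrier_vec D \<and> A *\<^sub>v x = unit_vec L i" using cs by auto
    qed
    then obtain f where f: "\<And>i. i \<in> {0..<L} \<Longrightarrow> f i \<in> carrier_vec D \<and> A *\<^sub>v f i = unit_vec L i"
      by metis
    define Y where "Y = Matrix.mat D L (\<lambda>(j,i). f i $ j)"
    have Yc: "Y \<in> carrier_mat D L" unfolding Y_def by auto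
    have colY: "col Y i = f i" if "i < L" for i
      using f[of i] that unfolding Y_def by (intro eq_vecI) auto
    have "A * Y = 1\<^sub>m L"
    proof (rule eq_matI)
      fix r i assume "r < dim_row (1\<^sub>m L :: 'a mat)" "i < dim_col (1\<^sub>m L :: 'a mat)"
      then have ri: "r < L" "i < L" by auto
      have "(A * Y) $$ (r,i) = (A *\<^sub>v f i) $ r" using A Yc ri colY by simp
      also have "\<dots> = (1\<^sub>m L :: 'a mat) $$ (r,i)" using f[of i] ri by simp
      finally show "(A * Y) $$ (r,i) = (1\<^sub>m L :: 'a mat) $$ (r,i)" .
    qed (use A Yc in auto)
    then show "\<exists>Y \<in> carrier_mat D L. A * Y = 1\<^sub>m L" using Yc by blast
  next
    assume "\<exists>Y \<in> carrier_mat D L. A * Y = 1\<^sub>m L"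
    then obtain Y where Yc: "Y \<in> carrier_mat D L" and AY: "A * Y = 1\<^sub>m L" by blast
    have "carrier_vec L \<subseteq> vs.col_space A"
    proof
      fix y :: "'a Matrix.vec" assume y: "y \<in> carrier_vec L"
      have "A *\<^sub>v (Y *\<^sub>v y) = (A * Y) *\<^sub>v y" using A Yc y by (simp add: assoc_mult_mat_vec)
      also have "\<dots> = y" using AY y by simp
      finally show "y \<in> vs.col_space A" using cs y Yc by auto
    qed
    then have sp: "vs.span (set (cols A)) = carrier_vec L" using cs unfolding vs.col_space_def by auto
    have "vs.rank A = vectorspace.dim class_ring (vs.V\<lparr>carrier := carrier_vec L\<rparr>)"
      unfolding vs.rank_def sp by simp
    also have "vs.V\<lparr>carrier := carrier_vec L\<rparr> = vs.V" by simp
    finally show "vs.rank A = L" using vs.dim_is_n by simp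
  qed
qed

lemma inv_char: assumes R: "(R :: 'a :: comm_ring_1 mat) \<in> carrier_mat n n"
  shows "invertible_mat R \<longleftrightarrow> (\<exists>S \<in> carrier_mat n n. R * S = 1\<^sub>m n \<and> S * R = 1\<^sub>m n)"
proof
  assume "invertible_mat R"
  then obtain B where 1: "R * B = 1\<^sub>m n" and 2: "B * R = 1\<^sub>m (dim_row B)"
    using R unfolding invertible_mat_def inverts_mat_def by auto
  have "dim_col B = n" using arg_cong[OF 1, of dim_col] by simp
  moreover have "dim_row B = n" using arg_cong[OF 2, of dim_col] R by simp
  ultimately show "\<exists>S \<in> carrier_mat n n. R * S = 1\<^sub>m n \<and> S * R = 1\<^sub>m n" using 1 2 by auto
next
  assume "\<exists>S \<in> carrier_mat n n. R * S = 1\<^sub>m n \<and> S * R = 1\<^sub>m n"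
  then show "invertible_mat R" using R unfolding invertible_mat_def inverts_mat_def square_mat.simps
    by auto
qed

lemma supp_facts: assumes "W \<in> supports K D"
  shows "W \<subseteq> {0..<K}" "card W = D" "card ({0..<K} - W) = K - D" "finite W"
  using assms unfolding supports_def by (auto simp: card_Diff_subset finite_subset)

lemma Mc_inv: assumes M: "(M :: 'a :: field mat) \<in> carrier_mat (K - D) K" and mds: "mds_mat M"
  and W: "W \<in> supports K D"
  shows "\<exists>Nc \<in> carrier_mat (K-D) (K-D). (M * (sel K ({0..<K} - W))\<^sup>T) * Nc = 1\<^sub>m (K-D)
             \<and> Nc * (M * (sel K ({0..<K} - W))\<^sup>T) = 1\<^sub>m (K-D)"
proof -
  note sf = supp_facts[OF W]
  have "invertible_mat (submatrix M {0..<dim_row M} ({0..<K} - W))"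
    using mds M sf unfolding mds_mat_def by auto
  then have "invertible_mat (M * (sel K ({0..<K} - W))\<^sup>T)"
    using submatrix_sel[OF M, of "{0..<K} - W"] M by auto
  moreover have "M * (sel K ({0..<K} - W))\<^sup>T \<in> carrier_mat (K-D) (K-D)"
    using mult_carrier_mat[OF M selT_carrier[of K "{0..<K}-W"]] sf(3) by simp
  ultimately show ?thesis using inv_char by blast
qed

declare assoc_mult_mat[simp del]

lemma minus_zero_mat: "(A :: 'a :: ab_group_add mat) \<in> carrier_mat n m \<Longrightarrow> A - 0\<^sub>m n m = A"
  by (intro eq_matI) auto

lemma Ghat_rinv:
  assumes M: "(M :: 'a :: field mat) \<in> carrier_mat (K - D) K" and mds: "mds_mat M"
  and W: "W \<in> supports K D" and V: "V \<in> carrier_mat L D" and Vp: "Vp \<in> carrier_mat D L"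
  and VVp: "V * Vp = 1\<^sub>m L"
  shows "\<exists>Y \<in> carrier_mat K (K - D + L). (global_coeff K W V @\<^sub>r M) * Y = 1\<^sub>m (K - D + L)"
proof -
  note sf = supp_facts[OF W]
  define c where "c = K - D"
  define Wc where "Wc = {0..<K} - W"
  obtain Nc where Nc: "Nc \<in> carrier_mat c c" and MN: "(M * (sel K Wc)\<^sup>T) * Nc = 1\<^sub>m c"
    using Mc_inv[OF M mds W] unfolding c_def[symmetric] Wc_def[symmetric] by auto
  define sW :: "'a mat" where "sW = sel K W"
  define sC :: "'a mat" where "sC = sel K Wc"
  have sWc: "sW \<in> carrier_mat D K" unfolding sW_def using sel_carrier[of K W] sf by simp
  have tWc: "sW\<^sup>T \<in> carrier_mat K D" using sWc by simp
  have sCc: "sC \<in> carrier_mat c K" unfolding sC_def c_def Wc_def using sel_carrier[of K "{0..<K} - W"] sf by simp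
  have tCc: "sC\<^sup>T \<in> carrier_mat K c" using sCc by simp
  have Mc: "M \<in> carrier_mat c K" using M unfolding c_def .
  have sWtW: "sW * sW\<^sup>T = 1\<^sub>m D" unfolding sW_def using sel_selT[OF sf(1)] sf by simp
  have sWtC: "sW * sC\<^sup>T = 0\<^sub>m D c" unfolding sW_def sC_def Wc_def c_def
    using sel_disj[of W "{0..<K} - W" K] sf by auto
  have MtCN: "(M * sC\<^sup>T) * Nc = 1\<^sub>m c" using MN unfolding sC_def .
  have U: "global_coeff K W V = V * sW" unfolding sW_def using global_coeff_sel[OF V sf(1) sf(2)] .
  have Uc: "V * sW \<in> carrier_mat L K" using V sWc by simp
  define X where "X = Nc * (M * (sW\<^sup>T * Vp))"
  have Xc: "X \<in> carrier_mat c L" unfolding X_def using Nc Mc tWc Vp by simp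
  define Y1 where "Y1 = sW\<^sup>T * Vp - sC\<^sup>T * X"
  define Y2 where "Y2 = sC\<^sup>T * Nc"
  have Y1c: "Y1 \<in> carrier_mat K L" unfolding Y1_def using tCc Xc by (intro minus_carrier_mat) simp
  have Y2c: "Y2 \<in> carrier_mat K c" unfolding Y2_def by (rule mult_carrier_mat[OF tCc Nc])
  define Y where "Y = four_block_mat Y1 Y2 (0\<^sub>m 0 L) (0\<^sub>m 0 c)"
  have Yc: "Y \<in> carrier_mat K (c + L)" unfolding Y_def
    using four_block_carrier_mat[OF Y1c, of "0\<^sub>m 0 c" 0 c Y2 "0\<^sub>m 0 L"] by (simp add: add.commute)
  have a1: "(V * sW) * (sW\<^sup>T * Vp) = 1\<^sub>m L"
  proof -
    have "(V * sW) * (sW\<^sup>T * Vp) = V * (sW * (sW\<^sup>T * Vp))"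
      by (rule assoc_mult_mat[OF V sWc mult_carrier_mat[OF tWc Vp]])
    also have "sW * (sW\<^sup>T * Vp) = (sW * sW\<^sup>T) * Vp"
      by (rule assoc_mult_mat[OF sWc tWc Vp, symmetric])
    also have "\<dots> = Vp" unfolding sWtW using Vp by simp
    finally show ?thesis using VVp by simp
  qed
  have a2: "(V * sW) * (sC\<^sup>T * X) = 0\<^sub>m L L"
  proof -
    have "(V * sW) * (sC\<^sup>T * X) = V * (sW * (sC\<^sup>T * X))"
      by (rule assoc_mult_mat[OF V sWc mult_carrier_mat[OF tCc Xc]])
    also have "sW * (sC\<^sup>T * X) = (sW * sC\<^sup>T) * X"
      by (rule assoc_mult_mat[OF sWc tCc Xc, symmetric])
    also have "\<dots> = 0\<^sub>m D L" unfolding sWtC using Xc by simp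
    finally show ?thesis using V by simp
  qed
  have UY1: "(V * sW) * Y1 = 1\<^sub>m L"
  proof -
    have "(V * sW) * Y1 = (V * sW) * (sW\<^sup>T * Vp) - (V * sW) * (sC\<^sup>T * X)"
      unfolding Y1_def by (rule mult_minus_distrib_mat[OF Uc mult_carrier_mat[OF tWc Vp] mult_carrier_mat[OF tCc Xc]])
    then show ?thesis using a1 a2 minus_zero_mat[of "1\<^sub>m L" L L] by simp
  qed
  have UY2: "(V * sW) * Y2 = 0\<^sub>m L c"
  proof -
    have "(V * sW) * Y2 = V * (sW * (sC\<^sup>T * Nc))" unfolding Y2_def
      by (rule assoc_mult_mat[OF V sWc mult_carrier_mat[OF tCc Nc]])
    also have "sW * (sC\<^sup>T * Nc) = (sW * sC\<^sup>T) * Nc"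
      by (rule assoc_mult_mat[OF sWc tCc Nc, symmetric])
    also have "\<dots> = 0\<^sub>m D c" unfolding sWtC using Nc by simp
    finally show ?thesis using V by simp
  qed
  have MY2: "M * Y2 = 1\<^sub>m c" unfolding Y2_def
    using assoc_mult_mat[OF Mc tCc Nc, symmetric] MtCN by simp
  have MY1: "M * Y1 = 0\<^sub>m c L"
  proof -
    have "M * Y1 = M * (sW\<^sup>T * Vp) - M * (sC\<^sup>T * X)"
      unfolding Y1_def by (rule mult_minus_distrib_mat[OF Mc mult_carrier_mat[OF tWc Vp] mult_carrier_mat[OF tCc Xc]])
    also have "M * (sC\<^sup>T * X) = ((M * sC\<^sup>T) * Nc) * (M * (sW\<^sup>T * Vp))"
    proof -
      have "M * (sC\<^sup>T * X) = (M * sC\<^sup>T) * X" by (rule assoc_mult_mat[OF Mc tCc Xc, symmetric])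
      also have "\<dots> = (M * sC\<^sup>T) * (Nc * (M * (sW\<^sup>T * Vp)))" unfolding X_def ..
      also have "\<dots> = ((M * sC\<^sup>T) * Nc) * (M * (sW\<^sup>T * Vp))"
        by (rule assoc_mult_mat[symmetric]) (use Mc tCc Nc tWc Vp in auto)
      finally show ?thesis .
    qed
    also have "\<dots> = M * (sW\<^sup>T * Vp)" unfolding MtCN using Mc tWc Vp by simp
    finally show ?thesis using Mc tWc Vp by simp
  qed
  have "(global_coeff K W V @\<^sub>r M) * Y
      = four_block_mat (V * sW) (0\<^sub>m L 0) M (0\<^sub>m c 0) * four_block_mat Y1 Y2 (0\<^sub>m 0 L) (0\<^sub>m 0 c)"
    unfolding U append_rows_def Y_def using Uc Mc V by simp
  also have "\<dots> = four_block_mat ((V * sW) * Y1 + 0\<^sub>m L 0 * 0\<^sub>m 0 L) ((V * sW) * Y2 + 0\<^sub>m L 0 * 0\<^sub>m 0 c)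
      (M * Y1 + 0\<^sub>m c 0 * 0\<^sub>m 0 L) (M * Y2 + 0\<^sub>m c 0 * 0\<^sub>m 0 c)"
    by (rule mult_four_block_mat[OF Uc _ Mc _ Y1c Y2c]) auto
  also have "\<dots> = four_block_mat (1\<^sub>m L) (0\<^sub>m L c) (0\<^sub>m c L) (1\<^sub>m c)"
    using UY1 UY2 MY1 MY2 by simp
  also have "\<dots> = 1\<^sub>m (K - D + L)" unfolding c_def by (simp add: add.commute)
  finally show ?thesis using Yc unfolding c_def by (metis add.commute)
qed

lemma EX_CB:
  assumes M: "(M :: 'a :: field mat) \<in> carrier_mat (K - D) K" and mds: "mds_mat M"
  and W: "W \<in> supports K D" and W': "W' \<in> supports K D"
  shows "\<exists>C \<in> carrier_mat D D. \<exists>B \<in> carrier_mat D (K - D). sel K W = C * sel K W' + B * M"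
proof -
  note sf = supp_facts[OF W] and sf' = supp_facts[OF W']
  define c where "c = K - D"
  obtain Nc where Nc: "Nc \<in> carrier_mat c c" and NM: "Nc * (M * (sel K ({0..<K} - W'))\<^sup>T) = 1\<^sub>m c"
    using Mc_inv[OF M mds W'] unfolding c_def[symmetric] by auto
  define sW :: "'a mat" where "sW = sel K W"
  define sW' :: "'a mat" where "sW' = sel K W'"
  define sC :: "'a mat" where "sC = sel K ({0..<K} - W')"
  have sWc: "sW \<in> carrier_mat D K" unfolding sW_def using sel_carrier[of K W] sf by simp
  have sW'c: "sW' \<in> carrier_mat D K" unfolding sW'_def using sel_carrier[of K W'] sf' by simp
  have tW'c: "sW'\<^sup>T \<in> carrier_mat K D" using sW'c by simp
  have sCc: "sC \<in> carrier_mat c K" unfolding sC_def c_def using sel_carrier[of K "{0..<K} - W'"] sf' by simp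
  have tCc: "sC\<^sup>T \<in> carrier_mat K c" using sCc by simp
  have Mc: "M \<in> carrier_mat c K" using M unfolding c_def .
  have NMc: "Nc * (M * sC\<^sup>T) = 1\<^sub>m c" using NM unfolding sC_def .
  have sumI: "sW'\<^sup>T * sW' + sC\<^sup>T * sC = 1\<^sub>m K" unfolding sW'_def sC_def by (rule sel_sum[OF sf'(1)])
  define B where "B = (sW * sC\<^sup>T) * Nc"
  have Bc: "B \<in> carrier_mat D c" unfolding B_def using mult_carrier_mat[OF mult_carrier_mat[OF sWc tCc] Nc] .
  define E where "E = sW - B * M"
  have BMc: "B * M \<in> carrier_mat D K" using mult_carrier_mat[OF Bc Mc] .
  have Ec: "E \<in> carrier_mat D K" unfolding E_def by (rule minus_carrier_mat[OF BMc])
  have BMtC: "(B * M) * sC\<^sup>T = sW * sC\<^sup>T"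
  proof -
    have "(B * M) * sC\<^sup>T = B * (M * sC\<^sup>T)" by (rule assoc_mult_mat[OF Bc Mc tCc])
    also have "\<dots> = (sW * sC\<^sup>T) * (Nc * (M * sC\<^sup>T))" unfolding B_def
      by (rule assoc_mult_mat) (use sWc tCc Nc Mc in auto)
    also have "\<dots> = sW * sC\<^sup>T" unfolding NMc using sWc tCc by simp
    finally show ?thesis .
  qed
  have EtC: "E * sC\<^sup>T = 0\<^sub>m D c"
  proof -
    have "E * sC\<^sup>T = sW * sC\<^sup>T - (B * M) * sC\<^sup>T" unfolding E_def
      by (rule minus_mult_distrib_mat[OF sWc BMc tCc])
    also have "\<dots> = 0\<^sub>m D c" unfolding BMtC using sWc tCc by simp
    finally show ?thesis .
  qed
  define C where "C = E * sW'\<^sup>T"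
  have Cc: "C \<in> carrier_mat D D" unfolding C_def using mult_carrier_mat[OF Ec tW'c] .
  have "E = E * 1\<^sub>m K" using Ec by simp
  also have "\<dots> = E * (sW'\<^sup>T * sW') + E * (sC\<^sup>T * sC)" unfolding sumI[symmetric]
    by (rule mult_add_distrib_mat[OF Ec]) (use tW'c sW'c tCc sCc in auto)
  also have "E * (sW'\<^sup>T * sW') = C * sW'" unfolding C_def
    by (rule assoc_mult_mat[symmetric, OF Ec tW'c sW'c])
  also have "E * (sC\<^sup>T * sC) = (E * sC\<^sup>T) * sC"
    by (rule assoc_mult_mat[symmetric, OF Ec tCc sCc])
  also have "\<dots> = 0\<^sub>m D K" unfolding EtC using sCc by simp
  also have "C * sW' + 0\<^sub>m D K = C * sW'" using Cc sW'c by simp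
  finally have "E = C * sW'" .
  moreover have "sW = E + B * M" unfolding E_def by (intro eq_matI) (use sWc BMc in auto)
  ultimately have "sW = C * sW' + B * M" by simp
  then show ?thesis using Cc Bc unfolding sW_def sW'_def c_def by blast
qed

lemma EX_CB_inv:
  assumes M: "(M :: 'a :: field mat) \<in> carrier_mat (K - D) K" and mds: "mds_mat M"
  and W: "W \<in> supports K D" and W': "W' \<in> supports K D"
  shows "\<exists>C \<in> carrier_mat D D. \<exists>C' \<in> carrier_mat D D. \<exists>B \<in> carrier_mat D (K - D).
           sel K W = C * sel K W' + B * M \<and> C * C' = 1\<^sub>m D \<and> C' * C = 1\<^sub>m D"
proof -
  note sf = supp_facts[OF W] and sf' = supp_facts[OF W']
  define c where "c = K - D"
  obtain C B where Cc: "C \<in> carrier_mat D D" and Bc: "B \<in> carrier_mat D c"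
    and e1: "sel K W = C * sel K W' + B * M"
    using EX_CB[OF M mds W W'] unfolding c_def by blast
  obtain C' B' where C'c: "C' \<in> carrier_mat D D" and B'c: "B' \<in> carrier_mat D c"
    and e2: "sel K W' = C' * sel K W + B' * M"
    using EX_CB[OF M mds W' W] unfolding c_def by blast
  obtain Nc where Nc: "Nc \<in> carrier_mat c c" and MN: "(M * (sel K ({0..<K} - W))\<^sup>T) * Nc = 1\<^sub>m c"
    using Mc_inv[OF M mds W] unfolding c_def[symmetric] by auto
  define sW :: "'a mat" where "sW = sel K W"
  define sW' :: "'a mat" where "sW' = sel K W'"
  define sC :: "'a mat" where "sC = sel K ({0..<K} - W)"
  have sWc: "sW \<in> carrier_mat D K" unfolding sW_def using sel_carrier[of K W] sf by simp
  have sW'c: "sW' \<in> carrier_mat D K" unfolding sW'_def using sel_carrier[of K W'] sf' by simp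
  have tWc: "sW\<^sup>T \<in> carrier_mat K D" using sWc by simp
  have sCc: "sC \<in> carrier_mat c K" unfolding sC_def c_def using sel_carrier[of K "{0..<K} - W"] sf by simp
  have tCc: "sC\<^sup>T \<in> carrier_mat K c" using sCc by simp
  have Mc: "M \<in> carrier_mat c K" using M unfolding c_def .
  have MtCN: "(M * sC\<^sup>T) * Nc = 1\<^sub>m c" using MN unfolding sC_def .
  have sWtW: "sW * sW\<^sup>T = 1\<^sub>m D" unfolding sW_def using sel_selT[OF sf(1)] sf by simp
  have sWtC: "sW * sC\<^sup>T = 0\<^sub>m D c" unfolding sW_def sC_def c_def
    using sel_disj[of W "{0..<K} - W" K] sf by auto
  define G where "G = C * C'"
  define H where "H = C * B' + B"
  have Gc: "G \<in> carrier_mat D D" unfolding G_def using mult_carrier_mat[OF Cc C'c] .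
  have CB'c: "C * B' \<in> carrier_mat D c" using mult_carrier_mat[OF Cc B'c] .
  have Hc: "H \<in> carrier_mat D c" unfolding H_def using add_carrier_mat[OF Bc] .
  have e3: "sW = G * sW + H * M"
  proof -
    have "sW = C * (C' * sW + B' * M) + B * M" using e1 e2 unfolding sW_def sW'_def by simp
    also have "C * (C' * sW + B' * M) = C * (C' * sW) + C * (B' * M)"
      by (rule mult_add_distrib_mat[OF Cc]) (use C'c sWc B'c Mc in auto)
    also have "C * (C' * sW) = G * sW" unfolding G_def by (rule assoc_mult_mat[symmetric, OF Cc C'c sWc])
    also have "C * (B' * M) = (C * B') * M" by (rule assoc_mult_mat[symmetric, OF Cc B'c Mc])
    also have "G * sW + (C * B') * M + B * M = G * sW + ((C * B') * M + B * M)"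
      by (rule assoc_add_mat) (use Gc sWc CB'c Mc Bc in auto)
    also have "(C * B') * M + B * M = H * M" unfolding H_def
      by (rule add_mult_distrib_mat[symmetric, OF CB'c Bc Mc])
    finally show ?thesis .
  qed
  have HMc: "H * (M * sC\<^sup>T) = 0\<^sub>m D c"
  proof -
    have "0\<^sub>m D c = sW * sC\<^sup>T" using sWtC by simp
    also have "\<dots> = (G * sW + H * M) * sC\<^sup>T" using e3 by simp
    also have "\<dots> = (G * sW) * sC\<^sup>T + (H * M) * sC\<^sup>T"
      by (rule add_mult_distrib_mat) (use Gc sWc Hc Mc tCc in auto)
    also have "(G * sW) * sC\<^sup>T = G * (sW * sC\<^sup>T)" by (rule assoc_mult_mat[OF Gc sWc tCc])
    also have "\<dots> = 0\<^sub>m D c" unfolding sWtC using Gc by simp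
    also have "(H * M) * sC\<^sup>T = H * (M * sC\<^sup>T)" by (rule assoc_mult_mat[OF Hc Mc tCc])
    finally show ?thesis using Hc Mc tCc by simp
  qed
  have H0: "H = 0\<^sub>m D c"
  proof -
    have "H = H * ((M * sC\<^sup>T) * Nc)" unfolding MtCN using Hc by simp
    also have "\<dots> = (H * (M * sC\<^sup>T)) * Nc"
      by (rule assoc_mult_mat[symmetric]) (use Hc Mc tCc Nc in auto)
    also have "\<dots> = 0\<^sub>m D c" unfolding HMc using Nc by simp
    finally show ?thesis .
  qed
  have e4: "sW = G * sW" using e3 unfolding H0 using Gc sWc Mc by simp
  have "1\<^sub>m D = sW * sW\<^sup>T" using sWtW by simp
  also have "\<dots> = (G * sW) * sW\<^sup>T" using e4 by simp
  also have "\<dots> = G * (sW * sW\<^sup>T)" by (rule assoc_mult_mat[OF Gc sWc tWc])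
  also have "\<dots> = G" unfolding sWtW using Gc by simp
  finally have CC': "C * C' = 1\<^sub>m D" unfolding G_def by simp
  have C'C: "C' * C = 1\<^sub>m D" by (rule mat_mult_left_right_inverse[OF Cc C'c CC'])
  show ?thesis using Cc C'c Bc e1 CC' C'C unfolding c_def by blast
qed

lemma Gh_block: assumes V: "(V :: 'a :: field mat) \<in> carrier_mat L D" and M: "M \<in> carrier_mat (K - D) K"
  and W: "W \<in> supports K D"
  shows "global_coeff K W V @\<^sub>r M = four_block_mat (V * sel K W) (0\<^sub>m L 0) M (0\<^sub>m (K - D) 0)"
proof -
  note sf = supp_facts[OF W]
  show ?thesis unfolding append_rows_def global_coeff_sel[OF V sf(1) sf(2)] using V M by simp
qed

definition Pi_mat :: "nat \<Rightarrow> nat \<Rightarrow> 'a :: field mat \<Rightarrow> 'a mat" where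
  "Pi_mat L c X = four_block_mat (1\<^sub>m L) X (0\<^sub>m c L) (1\<^sub>m c)"

lemma Pi_carrier: "X \<in> carrier_mat L c \<Longrightarrow> Pi_mat L c X \<in> carrier_mat (L + c) (L + c)"
  unfolding Pi_mat_def by (rule four_block_carrier_mat) auto

lemma Pi_mult: assumes X: "(X :: 'a :: field mat) \<in> carrier_mat L c" and Y: "Y \<in> carrier_mat L c"
  shows "Pi_mat L c X * Pi_mat L c Y = Pi_mat L c (X + Y)"
proof -
  have "Pi_mat L c X * Pi_mat L c Y = four_block_mat (1\<^sub>m L * 1\<^sub>m L + X * 0\<^sub>m c L) (1\<^sub>m L * Y + X * 1\<^sub>m c)
     (0\<^sub>m c L * 1\<^sub>m L + 1\<^sub>m c * 0\<^sub>m c L) (0\<^sub>m c L * Y + 1\<^sub>m c * 1\<^sub>m c)"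
    unfolding Pi_mat_def by (rule mult_four_block_mat) (use X Y in auto)
  also have "\<dots> = Pi_mat L c (X + Y)" unfolding Pi_mat_def using X Y
    by (simp add: comm_add_mat[OF Y X])
  finally show ?thesis .
qed

lemma Pi_zero: "Pi_mat L c (0\<^sub>m L c :: 'a :: field mat) = 1\<^sub>m (L + c)"
  unfolding Pi_mat_def by simp

lemma Pi_inv: assumes X: "(X :: 'a :: field mat) \<in> carrier_mat L c"
  shows "invertible_mat (Pi_mat L c X)"
proof -
  have z1: "X + - X = 0\<^sub>m L c" by (intro eq_matI) (use X in auto)
  have z2: "- X + X = 0\<^sub>m L c" by (intro eq_matI) (use X in auto)
  have "Pi_mat L c X * Pi_mat L c (- X) = 1\<^sub>m (L + c)"
    using Pi_mult[OF X uminus_carrier_mat[OF X]] z1 Pi_zero by simp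
  moreover have "Pi_mat L c (- X) * Pi_mat L c X = 1\<^sub>m (L + c)"
    using Pi_mult[OF uminus_carrier_mat[OF X] X] z2 Pi_zero by simp
  ultimately show ?thesis
    using inv_char[OF Pi_carrier[OF X]] Pi_carrier[OF uminus_carrier_mat[OF X]] by blast
qed

lemma invertible_mult: assumes A: "(A :: 'a :: field mat) \<in> carrier_mat n n" and B: "B \<in> carrier_mat n n"
  and iA: "invertible_mat A" and iB: "invertible_mat B"
  shows "invertible_mat (A * B)"
proof -
  obtain S where S: "S \<in> carrier_mat n n" "A * S = 1\<^sub>m n" "S * A = 1\<^sub>m n" using inv_char[OF A] iA by blast
  obtain T where T: "T \<in> carrier_mat n n" "B * T = 1\<^sub>m n" "T * B = 1\<^sub>m n" using inv_char[OF B] iB by blast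
  have "(A * B) * (T * S) = A * (B * (T * S))"
    by (rule assoc_mult_mat[OF A B mult_carrier_mat[OF T(1) S(1)]])
  also have "B * (T * S) = (B * T) * S" by (rule assoc_mult_mat[symmetric, OF B T(1) S(1)])
  also have "\<dots> = S" unfolding T(2) using S(1) by simp
  finally have "(A * B) * (T * S) = A * S" .
  then have "(A * B) * (T * S) = 1\<^sub>m n" using S(2) by simp
  note 1 = this
  have 2: "(T * S) * (A * B) = 1\<^sub>m n"
    by (rule mat_mult_left_right_inverse[OF mult_carrier_mat[OF A B] mult_carrier_mat[OF T(1) S(1)] 1])
  show ?thesis using inv_char[OF mult_carrier_mat[OF A B]] 1 2 mult_carrier_mat[OF T(1) S(1)] by blast
qed

lemma Gh_transform:
  assumes M: "(M :: 'a :: field mat) \<in> carrier_mat (K - D) K"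
  and W: "W \<in> supports K D" and W': "W' \<in> supports K D"
  and V: "V \<in> carrier_mat L D" and C: "C \<in> carrier_mat D D" and B: "B \<in> carrier_mat D (K - D)"
  and e: "sel K W = C * sel K W' + B * M"
  shows "global_coeff K W V @\<^sub>r M = Pi_mat L (K - D) (V * B) * (global_coeff K W' (V * C) @\<^sub>r M)"
proof -
  note sf = supp_facts[OF W] and sf' = supp_facts[OF W']
  define c where "c = K - D"
  have Mc: "M \<in> carrier_mat c K" using M unfolding c_def .
  have Bc: "B \<in> carrier_mat D c" using B unfolding c_def .
  have VC: "V * C \<in> carrier_mat L D" using mult_carrier_mat[OF V C] .
  have VB: "V * B \<in> carrier_mat L c" using mult_carrier_mat[OF V Bc] .
  have sW'c: "sel K W' \<in> carrier_mat D K" using sel_carrier[of K W'] sf' by simp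
  have VCs: "(V * C) * sel K W' \<in> carrier_mat L K" using mult_carrier_mat[OF VC sW'c] .
  have top: "(V * C) * sel K W' + (V * B) * M = V * sel K W"
  proof -
    have "(V * C) * sel K W' = V * (C * sel K W')" by (rule assoc_mult_mat[OF V C sW'c])
    moreover have "(V * B) * M = V * (B * M)" by (rule assoc_mult_mat[OF V Bc Mc])
    moreover have "V * (C * sel K W') + V * (B * M) = V * (C * sel K W' + B * M)"
      by (rule mult_add_distrib_mat[symmetric, OF V mult_carrier_mat[OF C sW'c] mult_carrier_mat[OF Bc Mc]])
    ultimately show ?thesis using e by simp
  qed
  have "Pi_mat L (K - D) (V * B) * (global_coeff K W' (V * C) @\<^sub>r M)
     = Pi_mat L c (V * B) * four_block_mat ((V * C) * sel K W') (0\<^sub>m L 0) M (0\<^sub>m c 0)"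
    unfolding Gh_block[OF VC M W'] c_def ..
  also have "\<dots> = four_block_mat (1\<^sub>m L * ((V * C) * sel K W') + (V * B) * M) (1\<^sub>m L * 0\<^sub>m L 0 + (V * B) * 0\<^sub>m c 0)
      (0\<^sub>m c L * ((V * C) * sel K W') + 1\<^sub>m c * M) (0\<^sub>m c L * 0\<^sub>m L 0 + 1\<^sub>m c * 0\<^sub>m c 0)"
    unfolding Pi_mat_def by (rule mult_four_block_mat) (use VB VCs Mc in auto)
  also have "\<dots> = four_block_mat (V * sel K W) (0\<^sub>m L 0) M (0\<^sub>m c 0)"
  proof -
    have h1: "1\<^sub>m L * ((V * C) * sel K W') = (V * C) * sel K W'" by (rule left_mult_one_mat[OF VCs])
    have h2: "(V * B) * 0\<^sub>m c 0 = 0\<^sub>m L 0" by (rule right_mult_zero_mat[OF VB])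
    have h3: "0\<^sub>m c L * ((V * C) * sel K W') = 0\<^sub>m c K" by (rule left_mult_zero_mat[OF VCs])
    have h4: "0\<^sub>m c K + M = M" by (rule left_add_zero_mat[OF Mc])
    have h5: "1\<^sub>m c * M = M" by (rule left_mult_one_mat[OF Mc])
    show ?thesis unfolding h1 h2 h3 h5 h4 top by simp
  qed
  also have "\<dots> = global_coeff K W V @\<^sub>r M" unfolding Gh_block[OF V M W] c_def ..
  finally show ?thesis by simp
qed

lemma carrier_mat_bij:
  "bij_betw (\<lambda>f. Matrix.mat n m f) ({0..<n}\<times>{0..<m} \<rightarrow>\<^sub>E (UNIV :: 'a set)) (carrier_mat n m :: 'a mat set)"
proof (rule bij_betwI')
  fix f g assume f: "f \<in> {0..<n}\<times>{0..<m} \<rightarrow>\<^sub>E (UNIV :: 'a set)" and g: "g \<in> {0..<n}\<times>{0..<m} \<rightarrow>\<^sub>E (UNIV :: 'a set)"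
  show "(Matrix.mat n m f = Matrix.mat n m g) = (f = g)"
  proof
    assume e: "Matrix.mat n m f = Matrix.mat n m g"
    show "f = g"
    proof (rule PiE_ext[OF f g])
      fix x assume "x \<in> {0..<n}\<times>{0..<m}"
      then obtain i j where x: "x = (i,j)" "i < n" "j < m" by auto
      have "Matrix.mat n m f $$ (i,j) = Matrix.mat n m g $$ (i,j)" using e by simp
      then show "f x = g x" using x by simp
    qed
  qed simp
next
  fix f assume "f \<in> {0..<n}\<times>{0..<m} \<rightarrow>\<^sub>E (UNIV :: 'a set)"
  then show "Matrix.mat n m f \<in> carrier_mat n m" by simp
next
  fix A :: "'a mat" assume A: "A \<in> carrier_mat n m"
  show "\<exists>f \<in> {0..<n}\<times>{0..<m} \<rightarrow>\<^sub>E (UNIV :: 'a set). A = Matrix.mat n m f"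
  proof (intro bexI)
    show "restrict (\<lambda>(i,j). A $$ (i,j)) ({0..<n}\<times>{0..<m}) \<in> {0..<n}\<times>{0..<m} \<rightarrow>\<^sub>E (UNIV :: 'a set)" by simp
    show "A = Matrix.mat n m (restrict (\<lambda>(i,j). A $$ (i,j)) ({0..<n}\<times>{0..<m}))"
      by (rule eq_matI) (use A in auto)
  qed
qed

lemma finite_carrier_mat: "finite (carrier_mat n m :: 'a :: finite mat set)"
  using bij_betw_finite[OF carrier_mat_bij[of n m, where 'a='a]] by (simp add: finite_PiE)

lemma card_carrier_mat: "card (carrier_mat n m :: 'a :: finite mat set) = CARD('a) ^ (n * m)"
proof -
  have "card (carrier_mat n m :: 'a mat set) = card ({0..<n}\<times>{0..<m} \<rightarrow>\<^sub>E (UNIV :: 'a set))"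
    using bij_betw_same_card[OF carrier_mat_bij[of n m, where 'a='a]] by simp
  also have "\<dots> = CARD('a) ^ (n * m)" by (simp add: card_PiE card_cartesian_product)
  finally show ?thesis .
qed

definition Tset :: "nat \<Rightarrow> nat \<Rightarrow> nat \<Rightarrow> nat \<Rightarrow> 'a :: field mat \<Rightarrow> nat set \<Rightarrow> 'a mat \<Rightarrow> ('a mat \<times> 'a mat \<times> 'a mat) set" where
  "Tset K D L N M W Qv = {(V,X,R). V \<in> coeffs_II L D \<and> X \<in> messages K N \<and> R \<in> invertibles (K - D + L)
                                  \<and> sac_query K M W V R = Qv}"

lemma finite_Tset: "finite (Tset K D L N (M :: 'a :: {finite,field} mat) W Qv)"
proof -
  have "Tset K D L N M W Qv \<subseteq> carrier_mat L D \<times> carrier_mat K N \<times> carrier_mat (K - D + L) (K - D + L)"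
    unfolding Tset_def coeffs_II_def messages_def invertibles_def by auto
  then show ?thesis by (rule finite_subset) (simp add: finite_carrier_mat)
qed

lemma card_Tset_le:
  assumes M: "(M :: 'a :: {finite,field} mat) \<in> carrier_mat (K - D) K" and mds: "mds_mat M"
  and W: "W \<in> supports K D" and W': "W' \<in> supports K D"
  shows "card (Tset K D L N M W Qv) \<le> card (Tset K D L N M W' Qv)"
proof -
  define c where "c = K - D"
  obtain C C' B where C: "C \<in> carrier_mat D D" and C': "C' \<in> carrier_mat D D" and B: "B \<in> carrier_mat D (K - D)"
    and e: "sel K W = C * sel K W' + B * M" and CC': "C * C' = 1\<^sub>m D" and C'C: "C' * C = 1\<^sub>m D"
    using EX_CB_inv[OF M mds W W'] by blast
  have Bc: "B \<in> carrier_mat D c" using B unfolding c_def .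
  have nn: "L + c = K - D + L" unfolding c_def by simp
  define f where "f = (\<lambda>(V :: 'a mat, X :: 'a mat, R :: 'a mat). (V * C, X, R * Pi_mat L c (V * B)))"
  have maps: "f ` Tset K D L N M W Qv \<subseteq> Tset K D L N M W' Qv"
  proof
    fix t assume "t \<in> f ` Tset K D L N M W Qv"
    then obtain V X R where t: "t = f (V,X,R)" and VXR: "(V,X,R) \<in> Tset K D L N M W Qv" by auto
    have V: "V \<in> carrier_mat L D" and rV: "vec_space.rank L V = L" and X: "X \<in> messages K N"
      and R: "R \<in> carrier_mat (K - D + L) (K - D + L)" and iR: "invertible_mat R"
      and Q: "sac_query K M W V R = Qv"
      using VXR unfolding Tset_def coeffs_II_def invertibles_def by auto
    obtain Vp where Vp: "Vp \<in> carrier_mat D L" and VVp: "V * Vp = 1\<^sub>m L" using rank_rinv[OF V] rV by blast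
    have VC: "V * C \<in> carrier_mat L D" using mult_carrier_mat[OF V C] .
    have "(V * C) * (C' * Vp) = V * ((C * C') * Vp)"
    proof -
      have "(V * C) * (C' * Vp) = V * (C * (C' * Vp))" by (rule assoc_mult_mat[OF V C mult_carrier_mat[OF C' Vp]])
      also have "C * (C' * Vp) = (C * C') * Vp" by (rule assoc_mult_mat[symmetric, OF C C' Vp])
      finally show ?thesis .
    qed
    also have "\<dots> = 1\<^sub>m L" unfolding CC' using Vp VVp by simp
    finally have "vec_space.rank L (V * C) = L" using rank_rinv[OF VC] mult_carrier_mat[OF C' Vp] by blast
    then have VCin: "V * C \<in> coeffs_II L D" unfolding coeffs_II_def using VC by simp
    have VB: "V * B \<in> carrier_mat L c" using mult_carrier_mat[OF V Bc] .
    have Pc: "Pi_mat L c (V * B) \<in> carrier_mat (K - D + L) (K - D + L)" using Pi_carrier[OF VB] nn by simp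
    have iRP: "invertible_mat (R * Pi_mat L c (V * B))"
      by (rule invertible_mult[OF R Pc iR Pi_inv[OF VB]])
    have RPin: "R * Pi_mat L c (V * B) \<in> invertibles (K - D + L)"
      unfolding invertibles_def using iRP mult_carrier_mat[OF R Pc] by simp
    have Ghc: "global_coeff K W' (V * C) @\<^sub>r M \<in> carrier_mat (L + c) K"
    proof -
      have s: "sel K W' \<in> carrier_mat D K" using sel_carrier[of K W'] supp_facts(2)[OF W'] by simp
      show ?thesis unfolding Gh_block[OF VC M W'] c_def
        using four_block_carrier_mat[OF mult_carrier_mat[OF VC s], of "0\<^sub>m (K - D) 0" "K - D" 0] by simp
    qed
    have "sac_query K M W' (V * C) (R * Pi_mat L c (V * B))
        = (R * Pi_mat L c (V * B)) * (global_coeff K W' (V * C) @\<^sub>r M)" unfolding sac_query_def ..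
    also have "\<dots> = R * (Pi_mat L c (V * B) * (global_coeff K W' (V * C) @\<^sub>r M))"
      by (rule assoc_mult_mat[OF R Pc]) (use Ghc nn in simp)
    also have "Pi_mat L c (V * B) * (global_coeff K W' (V * C) @\<^sub>r M) = global_coeff K W V @\<^sub>r M"
      using Gh_transform[OF M W W' V C B e] unfolding c_def by simp
    finally have "sac_query K M W' (V * C) (R * Pi_mat L c (V * B)) = Qv" using Q unfolding sac_query_def by simp
    then show "t \<in> Tset K D L N M W' Qv" unfolding t f_def Tset_def using VCin X RPin by simp
  qed
  have inj: "inj_on f (Tset K D L N M W Qv)"
  proof (rule inj_onI)
    fix t1 t2 assume t1: "t1 \<in> Tset K D L N M W Qv" and t2: "t2 \<in> Tset K D L N M W Qv" and e12: "f t1 = f t2"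
    obtain V1 X1 R1 where t1e: "t1 = (V1,X1,R1)" by (cases t1) auto
    obtain V2 X2 R2 where t2e: "t2 = (V2,X2,R2)" by (cases t2) auto
    have V1: "V1 \<in> carrier_mat L D" and R1: "R1 \<in> carrier_mat (K - D + L) (K - D + L)"
      using t1 unfolding t1e Tset_def coeffs_II_def invertibles_def by auto
    have V2: "V2 \<in> carrier_mat L D" and R2: "R2 \<in> carrier_mat (K - D + L) (K - D + L)"
      using t2 unfolding t2e Tset_def coeffs_II_def invertibles_def by auto
    have eV: "V1 * C = V2 * C" and eX: "X1 = X2" and eR: "R1 * Pi_mat L c (V1 * B) = R2 * Pi_mat L c (V2 * B)"
      using e12 unfolding t1e t2e f_def by auto
    have V12: "V1 = V2"
    proof -
      have "V1 = V1 * (C * C')" unfolding CC' using V1 by simp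
      also have "\<dots> = (V1 * C) * C'" by (rule assoc_mult_mat[symmetric, OF V1 C C'])
      also have "\<dots> = (V2 * C) * C'" unfolding eV ..
      also have "\<dots> = V2 * (C * C')" by (rule assoc_mult_mat[OF V2 C C'])
      also have "\<dots> = V2" unfolding CC' using V2 by simp
      finally show ?thesis .
    qed
    define P where "P = Pi_mat L c (V1 * B)"
    have VB: "V1 * B \<in> carrier_mat L c" using mult_carrier_mat[OF V1 Bc] .
    have Pc: "P \<in> carrier_mat (K - D + L) (K - D + L)" unfolding P_def using Pi_carrier[OF VB] nn by simp
    obtain S where S: "S \<in> carrier_mat (K - D + L) (K - D + L)" "P * S = 1\<^sub>m (K - D + L)"
      using inv_char[OF Pc] Pi_inv[OF VB] unfolding P_def by blast
    have eR': "R1 * P = R2 * P" using eR unfolding P_def V12 .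
    have "R1 = (R1 * P) * S" using assoc_mult_mat[OF R1 Pc S(1)] S(2) R1 by simp
    also have "\<dots> = (R2 * P) * S" unfolding eR' ..
    also have "\<dots> = R2" using assoc_mult_mat[OF R2 Pc S(1)] S(2) R2 by simp
    finally show "t1 = t2" unfolding t1e t2e using V12 eX by simp
  qed
  show ?thesis by (rule card_inj_on_le[OF inj maps finite_Tset])
qed

lemma entropy2_return: "entropy2 (return_pmf z) = 0"
  unfolding entropy2_def by simp

lemma Hc_zero:
  assumes det: "\<And>w1 w2. w1 \<in> set_pmf Om \<Longrightarrow> w2 \<in> set_pmf Om \<Longrightarrow> Y w1 = Y w2 \<Longrightarrow> Z w1 = Z w2"
  shows "Hc Om Z Y = 0"
  unfolding Hc_def
proof (rule sum.neutral, rule ballI)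
  fix y assume "y \<in> set_pmf (map_pmf Y Om)"
  then obtain w0 where w0: "w0 \<in> set_pmf Om" "Y w0 = y" by auto
  have ne: "set_pmf Om \<inter> {w. Y w = y} \<noteq> {}" using w0 by auto
  have "map_pmf Z (cond_pmf Om {w. Y w = y}) = return_pmf (Z w0)"
    unfolding map_pmf_eq_return_pmf_iff set_cond_pmf[OF ne]
  proof (intro ballI)
    fix w assume "w \<in> set_pmf Om \<inter> {w. Y w = y}"
    then have "w \<in> set_pmf Om" "Y w = Y w0" using w0 by auto
    then show "Z w = Z w0" using det[of w w0] w0(1) by blast
  qed
  then show "pmf (map_pmf Y Om) y * entropy2 (map_pmf Z (cond_pmf Om {w. Y w = y})) = 0"
    by (simp add: entropy2_return)
qed

lemma pair_pmf_of_set: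
  assumes "finite A" "A \<noteq> {}" "finite B" "B \<noteq> {}"
  shows "pair_pmf (pmf_of_set A) (pmf_of_set B) = pmf_of_set (A \<times> B)"
proof (rule pmf_eqI)
  fix x :: "'a \<times> 'b"
  obtain a b where x: "x = (a,b)" by (cases x)
  show "pmf (pair_pmf (pmf_of_set A) (pmf_of_set B)) x = pmf (pmf_of_set (A \<times> B)) x"
    unfolding x pmf_pair using assms by (simp add: card_cartesian_product indicator_def)
qed

lemma entropy2_pmf_of_set:
  assumes "finite S" "S \<noteq> {}"
  shows "entropy2 (pmf_of_set S) = log 2 (real (card S))"
proof -
  have c: "card S > 0" using assms by (simp add: card_gt_0_iff)
  have "entropy2 (pmf_of_set S) = - (\<Sum>x\<in>S. (1 / real (card S)) * log 2 (1 / real (card S)))"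
    unfolding entropy2_def using assms by simp
  also have "\<dots> = - log 2 (1 / real (card S))" using c by simp
  also have "\<dots> = log 2 (real (card S))" using c by (simp add: log_divide)
  finally show ?thesis .
qed

lemma map_pmf_of_set_uniform:
  assumes S: "finite S" "S \<noteq> {}" and T: "finite T" "T \<noteq> {}"
  and into: "\<And>s. s \<in> S \<Longrightarrow> f s \<in> T"
  and fib: "\<And>t t'. t \<in> T \<Longrightarrow> t' \<in> T \<Longrightarrow> card {s\<in>S. f s = t} \<le> card {s\<in>S. f s = t'}"
  shows "map_pmf f (pmf_of_set S) = pmf_of_set T"
proof -
  obtain t0 where t0: "t0 \<in> T" using T by auto
  define k where "k = card {s\<in>S. f s = t0}"
  have fk: "card {s\<in>S. f s = t} = k" if "t \<in> T" for t
    using fib[OF that t0] fib[OF t0 that] unfolding k_def by simp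
  have pm: "pmf (map_pmf f (pmf_of_set S)) t = real (card {s\<in>S. f s = t}) / real (card S)" for t
  proof -
    have "S \<inter> f -` {t} = {s\<in>S. f s = t}" by auto
    then show ?thesis unfolding pmf_map using measure_pmf_of_set[OF S(2) S(1)] by simp
  qed
  have sub: "set_pmf (map_pmf f (pmf_of_set S)) \<subseteq> T" using into S by auto
  have "(\<Sum>t\<in>T. pmf (map_pmf f (pmf_of_set S)) t) = 1" by (rule sum_pmf_eq_1[OF T(1) sub])
  moreover have "(\<Sum>t\<in>T. pmf (map_pmf f (pmf_of_set S)) t) = (\<Sum>t\<in>T. real k / real (card S))"
    by (rule sum.cong) (simp_all add: pm fk)
  ultimately have s1: "(\<Sum>t\<in>T. real k / real (card S)) = 1" by (metis (no_types))
  then have sumk: "real (card T) * (real k / real (card S)) = 1" by (simp only: sum_constant)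
  show ?thesis
  proof (rule pmf_eqI)
    fix t
    show "pmf (map_pmf f (pmf_of_set S)) t = pmf (pmf_of_set T) t"
    proof (cases "t \<in> T")
      case True
      have "real (card T) > 0" using T by (simp add: card_gt_0_iff)
      have kpos: "k > 0"
      proof (rule ccontr)
        assume "\<not> k > 0" then have "k = 0" by simp
        with sumk show False by simp
      qed
      have e: "real k / real (card S) = 1 / real (card T)" using sumk kpos \<open>real (card T) > 0\<close>
        by (simp add: eq_divide_eq mult.commute)
      have "pmf (map_pmf f (pmf_of_set S)) t = real k / real (card S)" using pm[of t] fk[OF True] by simp
      also have "\<dots> = pmf (pmf_of_set T) t" using e True T by simp
      finally show ?thesis .
    next
      case False
      then have "{s\<in>S. f s = t} = {}" using into by auto
      then have "pmf (map_pmf f (pmf_of_set S)) t = 0" using pm[of t] by (simp only: card.empty)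
      then show ?thesis using False T by simp
    qed
  qed
qed

lemma rinv_shift:
  assumes A: "(A :: 'a :: field mat) \<in> carrier_mat r K" and Y: "Y \<in> carrier_mat K r" and AY: "A * Y = 1\<^sub>m r"
  and X: "X \<in> carrier_mat K N" and t: "t \<in> carrier_mat r N" and t': "t' \<in> carrier_mat r N" and AX: "A * X = t"
  shows "A * (X + Y * (t' - t)) = t'" "X + Y * (t' - t) \<in> carrier_mat K N"
proof -
  have d: "t' - t \<in> carrier_mat r N" using minus_carrier_mat[OF t] .
  have Yd: "Y * (t' - t) \<in> carrier_mat K N" using mult_carrier_mat[OF Y d] .
  show "X + Y * (t' - t) \<in> carrier_mat K N" using add_carrier_mat[OF Yd] by simp
  have "A * (X + Y * (t' - t)) = A * X + A * (Y * (t' - t))" by (rule mult_add_distrib_mat[OF A X Yd])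
  also have "A * (Y * (t' - t)) = (A * Y) * (t' - t)" by (rule assoc_mult_mat[symmetric, OF A Y d])
  also have "\<dots> = t' - t" unfolding AY by (rule left_mult_one_mat[OF d])
  finally show "A * (X + Y * (t' - t)) = t'" unfolding AX by (intro eq_matI) (use t t' in auto)
qed

lemma fiber_shift:
  fixes F :: "'w \<Rightarrow> 'v \<Rightarrow> 'r \<Rightarrow> 'a :: {finite,field} mat"
  assumes fin: "finite S1" "finite S2" "finite S4"
  and Fc: "\<And>W V R. W \<in> S1 \<Longrightarrow> V \<in> S2 \<Longrightarrow> R \<in> S4 \<Longrightarrow> F W V R \<in> carrier_mat r K"
  and Fr: "\<And>W V R. W \<in> S1 \<Longrightarrow> V \<in> S2 \<Longrightarrow> R \<in> S4 \<Longrightarrow> \<exists>Y \<in> carrier_mat K r. F W V R * Y = 1\<^sub>m r"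
  and t: "t \<in> carrier_mat r N" and t': "t' \<in> carrier_mat r N"
  shows "card {s \<in> S1 \<times> S2 \<times> carrier_mat K N \<times> S4. (\<lambda>(W,V,X,R). F W V R * X) s = t}
       \<le> card {s \<in> S1 \<times> S2 \<times> carrier_mat K N \<times> S4. (\<lambda>(W,V,X,R). F W V R * X) s = t'}"
proof -
  define Yf where "Yf = (\<lambda>W V R. SOME Y. Y \<in> carrier_mat K r \<and> F W V R * Y = 1\<^sub>m r)"
  have Yf: "Yf W V R \<in> carrier_mat K r \<and> F W V R * Yf W V R = 1\<^sub>m r" if "W \<in> S1" "V \<in> S2" "R \<in> S4" for W V R
    unfolding Yf_def by (rule someI_ex) (use Fr[OF that] in blast)
  define g where "g = (\<lambda>(W,V,X,R). (W, V, X + Yf W V R * (t' - t), R))"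
  let ?A = "{s \<in> S1 \<times> S2 \<times> carrier_mat K N \<times> S4. (\<lambda>(W,V,X,R). F W V R * X) s = t}"
  let ?B = "{s \<in> S1 \<times> S2 \<times> carrier_mat K N \<times> S4. (\<lambda>(W,V,X,R). F W V R * X) s = t'}"
  have "finite (S1 \<times> S2 \<times> (carrier_mat K N :: 'a mat set) \<times> S4)" using fin by (intro finite_cartesian_product finite_carrier_mat)
  then have finB: "finite ?B" by simp
  have maps: "g ` ?A \<subseteq> ?B"
  proof
    fix s assume "s \<in> g ` ?A"
    then obtain W V X R where s: "s = g (W,V,X,R)" and "(W,V,X,R) \<in> ?A" by auto
    then have W: "W \<in> S1" and V: "V \<in> S2" and X: "X \<in> carrier_mat K N" and R: "R \<in> S4"
      and e: "F W V R * X = t" by auto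
    note Y = Yf[OF W V R]
    have "F W V R * (X + Yf W V R * (t' - t)) = t'" "X + Yf W V R * (t' - t) \<in> carrier_mat K N"
      using rinv_shift[OF Fc[OF W V R] conjunct1[OF Y] conjunct2[OF Y] X t t' e] by auto
    then show "s \<in> ?B" unfolding s g_def using W V R by simp
  qed
  have inj: "inj_on g ?A"
  proof (rule inj_onI)
    fix s1 s2 assume s1: "s1 \<in> ?A" and s2: "s2 \<in> ?A" and e: "g s1 = g s2"
    obtain W1 V1 X1 R1 where s1e: "s1 = (W1,V1,X1,R1)" by (cases s1) auto
    obtain W2 V2 X2 R2 where s2e: "s2 = (W2,V2,X2,R2)" by (cases s2) auto
    have W1: "W1 = W2" and V1: "V1 = V2" and R1: "R1 = R2"
      and eX: "X1 + Yf W1 V1 R1 * (t' - t) = X2 + Yf W2 V2 R2 * (t' - t)"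
      using e unfolding s1e s2e g_def by auto
    have X1: "X1 \<in> carrier_mat K N" and X2: "X2 \<in> carrier_mat K N" using s1 s2 unfolding s1e s2e by auto
    have mem2: "W2 \<in> S1" "V2 \<in> S2" "R2 \<in> S4" using s2 unfolding s2e by auto
    have Yc: "Yf W2 V2 R2 * (t' - t) \<in> carrier_mat K N"
      using mult_carrier_mat[OF conjunct1[OF Yf[OF mem2]] minus_carrier_mat[OF t]] .
    have "X1 = X2"
    proof (rule eq_matI)
      fix i j assume ij: "i < dim_row X2" "j < dim_col X2"
      have "(X1 + Yf W1 V1 R1 * (t' - t)) $$ (i,j) = (X2 + Yf W2 V2 R2 * (t' - t)) $$ (i,j)" using eX by simp
      then show "X1 $$ (i,j) = X2 $$ (i,j)" using ij X1 X2 carrier_matD[OF Yc] unfolding W1 V1 R1 by (simp add: index_add_mat)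
    qed (use X1 X2 in auto)
    then show "s1 = s2" unfolding s1e s2e using W1 V1 R1 by simp
  qed
  show ?thesis by (rule card_inj_on_le[OF inj maps finB])
qed

lemma demand_eq:
  assumes V: "(V :: 'a :: field mat) \<in> carrier_mat L D" and W: "W \<in> supports K D" and X: "X \<in> carrier_mat K N"
  shows "demand W V X = global_coeff K W V * X"
proof -
  note sf = supp_facts[OF W]
  have s: "sel K W \<in> carrier_mat D K" using sel_carrier[of K W] sf by simp
  have "demand W V X = V * (sel K W * X)" unfolding demand_def sel_mult_rows[OF X sf(1)] ..
  also have "\<dots> = (V * sel K W) * X" by (rule assoc_mult_mat[symmetric, OF V s X])
  finally show ?thesis unfolding global_coeff_sel[OF V sf(1) sf(2)] .
qed

lemma gc_carrier: assumes V: "(V :: 'a :: field mat) \<in> carrier_mat L D" and W: "W \<in> supports K D"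
  shows "global_coeff K W V \<in> carrier_mat L K"
  using V unfolding global_coeff_def by auto

lemma gc_rinv: assumes V: "(V :: 'a :: field mat) \<in> coeffs_II L D" and W: "W \<in> supports K D"
  shows "\<exists>Y \<in> carrier_mat K L. global_coeff K W V * Y = 1\<^sub>m L"
proof -
  note sf = supp_facts[OF W]
  have Vc: "V \<in> carrier_mat L D" using V unfolding coeffs_II_def by auto
  obtain Vp where Vp: "Vp \<in> carrier_mat D L" "V * Vp = 1\<^sub>m L"
    using rank_rinv[OF Vc] V unfolding coeffs_II_def by auto
  have s: "sel K W \<in> carrier_mat D K" using sel_carrier[of K W] sf by simp
  have t: "(sel K W)\<^sup>T \<in> carrier_mat K D" using s by simp
  have "(V * sel K W) * ((sel K W)\<^sup>T * Vp) = V * (sel K W * ((sel K W)\<^sup>T * Vp))"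
    by (rule assoc_mult_mat[OF Vc s mult_carrier_mat[OF t Vp(1)]])
  also have "sel K W * ((sel K W)\<^sup>T * Vp) = (sel K W * (sel K W)\<^sup>T) * Vp"
    by (rule assoc_mult_mat[symmetric, OF s t Vp(1)])
  also have "\<dots> = Vp" unfolding sel_selT[OF sf(1)] using Vp(1) sf by simp
  finally have "global_coeff K W V * ((sel K W)\<^sup>T * Vp) = 1\<^sub>m L"
    unfolding global_coeff_sel[OF Vc sf(1) sf(2)] using Vp(2) by simp
  then show ?thesis using mult_carrier_mat[OF t Vp(1)] by blast
qed

lemma Gh_rinv': assumes M: "(M :: 'a :: field mat) \<in> carrier_mat (K - D) K" and mds: "mds_mat M"
  and V: "V \<in> coeffs_II L D" and W: "W \<in> supports K D"
  shows "\<exists>Y \<in> carrier_mat K (K - D + L). (global_coeff K W V @\<^sub>r M) * Y = 1\<^sub>m (K - D + L)"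
proof -
  have Vc: "V \<in> carrier_mat L D" using V unfolding coeffs_II_def by auto
  obtain Vp where Vp: "Vp \<in> carrier_mat D L" "V * Vp = 1\<^sub>m L"
    using rank_rinv[OF Vc] V unfolding coeffs_II_def by auto
  show ?thesis by (rule Ghat_rinv[OF M mds W Vc Vp])
qed

lemma Gh_carrier: assumes M: "(M :: 'a :: field mat) \<in> carrier_mat (K - D) K"
  and V: "V \<in> carrier_mat L D" and W: "W \<in> supports K D"
  shows "global_coeff K W V @\<^sub>r M \<in> carrier_mat (K - D + L) K"
  using carrier_append_rows[OF gc_carrier[OF V W] M] by (simp add: add.commute)

lemma query_rinv: assumes M: "(M :: 'a :: field mat) \<in> carrier_mat (K - D) K" and mds: "mds_mat M"
  and V: "V \<in> coeffs_II L D" and W: "W \<in> supports K D" and R: "R \<in> invertibles (K - D + L)"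
  shows "sac_query K M W V R \<in> carrier_mat (K - D + L) K"
        "\<exists>Y \<in> carrier_mat K (K - D + L). sac_query K M W V R * Y = 1\<^sub>m (K - D + L)"
proof -
  let ?n = "K - D + L"
  have Vc: "V \<in> carrier_mat L D" using V unfolding coeffs_II_def by auto
  have Rc: "R \<in> carrier_mat ?n ?n" and iR: "invertible_mat R" using R unfolding invertibles_def by auto
  have G: "global_coeff K W V @\<^sub>r M \<in> carrier_mat ?n K" by (rule Gh_carrier[OF M Vc W])
  show "sac_query K M W V R \<in> carrier_mat ?n K" unfolding sac_query_def using mult_carrier_mat[OF Rc G] .
  obtain Y where Y: "Y \<in> carrier_mat K ?n" "(global_coeff K W V @\<^sub>r M) * Y = 1\<^sub>m ?n"
    using Gh_rinv'[OF M mds V W] by blast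
  obtain S where S: "S \<in> carrier_mat ?n ?n" "R * S = 1\<^sub>m ?n" using inv_char[OF Rc] iR by blast
  have "(R * (global_coeff K W V @\<^sub>r M)) * (Y * S) = R * ((global_coeff K W V @\<^sub>r M) * (Y * S))"
    by (rule assoc_mult_mat[OF Rc G mult_carrier_mat[OF Y(1) S(1)]])
  also have "(global_coeff K W V @\<^sub>r M) * (Y * S) = ((global_coeff K W V @\<^sub>r M) * Y) * S"
    by (rule assoc_mult_mat[symmetric, OF G Y(1) S(1)])
  also have "\<dots> = S" unfolding Y(2) using S(1) by simp
  finally have "sac_query K M W V R * (Y * S) = 1\<^sub>m ?n" unfolding sac_query_def using S(2) by simp
  then show "\<exists>Y \<in> carrier_mat K ?n. sac_query K M W V R * Y = 1\<^sub>m ?n" using mult_carrier_mat[OF Y(1) S(1)] by blast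
qed

lemma append_rows_index: assumes U: "(U :: 'a :: field mat) \<in> carrier_mat L K" and M: "M \<in> carrier_mat c K"
  and i: "i < L" and k: "k < K"
  shows "(U @\<^sub>r M) $$ (i,k) = U $$ (i,k)"
  unfolding append_rows_def using U M i k by simp

lemma top_rows: assumes U: "(U :: 'a :: field mat) \<in> carrier_mat L K" and M: "M \<in> carrier_mat c K"
  and X: "X \<in> carrier_mat K N" and X': "X' \<in> carrier_mat K N"
  and e: "(U @\<^sub>r M) * X = (U @\<^sub>r M) * X'"
  shows "U * X = U * X'"
proof (rule eq_matI)
  have G: "U @\<^sub>r M \<in> carrier_mat (L + c) K" using carrier_append_rows[OF U M] .
  fix i j assume "i < dim_row (U * X')" "j < dim_col (U * X')"
  then have i: "i < L" and j: "j < N" using U X' by auto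
  have ent: "(U * Z) $$ (i,j) = ((U @\<^sub>r M) * Z) $$ (i,j)" if Z: "Z \<in> carrier_mat K N" for Z
  proof -
    have "(U * Z) $$ (i,j) = (\<Sum>k\<in>{0..<K}. U $$ (i,k) * Z $$ (k,j))"
      using U Z i j by (simp add: scalar_prod_def)
    also have "\<dots> = (\<Sum>k\<in>{0..<K}. (U @\<^sub>r M) $$ (i,k) * Z $$ (k,j))"
      by (rule sum.cong) (use append_rows_index[OF U M i] in auto)
    also have "\<dots> = ((U @\<^sub>r M) * Z) $$ (i,j)"
      using G Z i j by (simp add: scalar_prod_def)
    finally show ?thesis .
  qed
  show "(U * X) $$ (i,j) = (U * X') $$ (i,j)" using ent[OF X] ent[OF X'] e by simp
qed (use U X X' in auto)

lemma supports_ne: assumes "D \<le> K" shows "supports K D \<noteq> {}"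
proof -
  have "{0..<D} \<in> supports K D" unfolding supports_def using assms by auto
  then show ?thesis by blast
qed

lemma finite_supports: "finite (supports K D)"
  unfolding supports_def by (rule finite_subset[of _ "Pow {0..<K}"]) auto

lemma card_supports: "card (supports K D) = K choose D"
  unfolding supports_def using n_subsets[of "{0..<K}" D] by simp

lemma coeffs_ne: assumes "L \<le> D" shows "(coeffs_II L D :: 'a :: field mat set) \<noteq> {}"
proof -
  define V0 :: "'a mat" where "V0 = Matrix.mat L D (\<lambda>(i,j). if i = j then 1 else 0)"
  define Y0 :: "'a mat" where "Y0 = Matrix.mat D L (\<lambda>(i,j). if i = j then 1 else 0)"
  have V0c: "V0 \<in> carrier_mat L D" unfolding V0_def by simp
  have Y0c: "Y0 \<in> carrier_mat D L" unfolding Y0_def by simp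
  have "V0 * Y0 = 1\<^sub>m L"
  proof (rule eq_matI)
    fix i j assume "i < dim_row (1\<^sub>m L :: 'a mat)" "j < dim_col (1\<^sub>m L :: 'a mat)"
    then have i: "i < L" and j: "j < L" by auto
    have "(V0 * Y0) $$ (i,j) = (\<Sum>k\<in>{0..<D}. (if i = k then 1 else 0) * (if k = j then 1 else (0::'a)))"
      unfolding V0_def Y0_def using i j assms by (simp add: scalar_prod_def)
    also have "\<dots> = (\<Sum>k\<in>{0..<D}. if k = i then (if k = j then 1 else 0) else (0::'a))"
      by (rule sum.cong) auto
    also have "\<dots> = (if i = j then 1 else 0)" using i assms by (simp add: sum.delta')
    finally show "(V0 * Y0) $$ (i,j) = (1\<^sub>m L :: 'a mat) $$ (i,j)" using i j by simp
  qed (use V0c Y0c in auto)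
  then have "vec_space.rank L V0 = L" using rank_rinv[OF V0c] Y0c by blast
  then have "V0 \<in> coeffs_II L D" unfolding coeffs_II_def using V0c by simp
  then show ?thesis by blast
qed

lemma invertibles_ne: "(invertibles n :: 'a :: field mat set) \<noteq> {}"
proof -
  have "invertible_mat (1\<^sub>m n :: 'a mat)" using inv_char[of "1\<^sub>m n" n] by auto
  then have "(1\<^sub>m n :: 'a mat) \<in> invertibles n" unfolding invertibles_def by simp
  then show ?thesis by blast
qed

lemma finite_coeffs: "finite (coeffs_II L D :: 'a :: {finite,field} mat set)"
  unfolding coeffs_II_def by (rule finite_subset[OF _ finite_carrier_mat[of L D]]) auto

lemma finite_invertibles: "finite (invertibles n :: 'a :: {finite,field} mat set)"
  unfolding invertibles_def by (rule finite_subset[OF _ finite_carrier_mat[of n n]]) auto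

lemma sac_space_eq:
  assumes "L \<le> D" "D \<le> K"
  shows "(sac_space K D L N :: (nat set \<times> 'a :: {finite,field} mat \<times> 'a mat \<times> 'a mat) pmf)
     = pmf_of_set (supports K D \<times> coeffs_II L D \<times> messages K N \<times> invertibles (K - D + L))"
proof -
  define S2 :: "'a mat set" where "S2 = coeffs_II L D"
  define S3 :: "'a mat set" where "S3 = messages K N"
  define S4 :: "'a mat set" where "S4 = invertibles (K - D + L)"
  have m: "finite S3" "S3 \<noteq> {}"
    unfolding S3_def messages_def using finite_carrier_mat[of K N] by auto
  have i: "finite S4" "S4 \<noteq> {}" unfolding S4_def using finite_invertibles invertibles_ne by auto
  have c: "finite S2" "S2 \<noteq> {}" unfolding S2_def using finite_coeffs coeffs_ne[OF assms(1)] by auto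
  have s: "finite (supports K D)" "supports K D \<noteq> {}" using finite_supports supports_ne[OF assms(2)] by auto
  have e1: "pair_pmf (pmf_of_set S3) (pmf_of_set S4) = pmf_of_set (S3 \<times> S4)"
    by (rule pair_pmf_of_set[OF m i])
  have e2: "pair_pmf (pmf_of_set S2) (pmf_of_set (S3 \<times> S4)) = pmf_of_set (S2 \<times> S3 \<times> S4)"
    by (rule pair_pmf_of_set[OF c]) (use m i in auto)
  have e3: "pair_pmf (pmf_of_set (supports K D)) (pmf_of_set (S2 \<times> S3 \<times> S4)) = pmf_of_set (supports K D \<times> S2 \<times> S3 \<times> S4)"
    by (rule pair_pmf_of_set[OF s]) (use m i c in auto)
  show ?thesis unfolding sac_space_def S2_def[symmetric] S3_def[symmetric] S4_def[symmetric] e1 e2 e3 ..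
qed

lemma part1:
  fixes K D L N :: nat and M :: "'a :: {finite, field} mat"
  assumes "L \<le> D" and "D \<le> K" and M: "M \<in> carrier_mat (K - D) K" and mds: "mds_mat M"
  shows "Hc (sac_space K D L N) (\<lambda>(W, V, X, R). demand W V X)
     (\<lambda>w. ((\<lambda>(W, V, X, R). sac_answer (sac_query K M W V R) X) w, (\<lambda>(W, V, X, R). sac_query K M W V R) w,
           (\<lambda>(W, V, X, R). W) w, (\<lambda>(W, V, X, R). V) w)) = 0"
proof (rule Hc_zero)
  let ?S = "supports K D \<times> (coeffs_II L D :: 'a mat set) \<times> (messages K N :: 'a mat set) \<times> (invertibles (K - D + L) :: 'a mat set)"
  have fin: "finite ?S" unfolding messages_def
    by (intro finite_cartesian_product finite_supports finite_coeffs finite_invertibles finite_carrier_mat)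
  have ne3: "(messages K N :: 'a mat set) \<noteq> {}" unfolding messages_def using zero_carrier_mat[of K N] by blast
  have ne: "?S \<noteq> {}" using supports_ne[OF assms(2)] coeffs_ne[OF assms(1)] invertibles_ne ne3
    by (simp only: Sigma_empty_iff) blast
  have sp: "set_pmf (sac_space K D L N) = ?S" unfolding sac_space_eq[OF assms(1,2)] by (rule set_pmf_of_set[OF ne fin])
  fix w1 w2 assume w1: "w1 \<in> set_pmf (sac_space K D L N)" and w2: "w2 \<in> set_pmf (sac_space K D L N)"
    and eq: "((\<lambda>(W, V, X, R). sac_answer (sac_query K M W V R) X) w1, (\<lambda>(W, V, X, R). sac_query K M W V R) w1,
           (\<lambda>(W, V, X, R). W) w1, (\<lambda>(W, V, X, R). V) w1) =
           ((\<lambda>(W, V, X, R). sac_answer (sac_query K M W V R) X) w2, (\<lambda>(W, V, X, R). sac_query K M W V R) w2,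
           (\<lambda>(W, V, X, R). W) w2, (\<lambda>(W, V, X, R). V) w2)"
  obtain W V X R where w1e: "w1 = (W,V,X,R)" by (cases w1) auto
  obtain W' V' X' R' where w2e: "w2 = (W',V',X',R')" by (cases w2) auto
  have mem1: "W \<in> supports K D" "V \<in> coeffs_II L D" "X \<in> carrier_mat K N" "R \<in> invertibles (K - D + L)"
    using w1 unfolding sp w1e messages_def by auto
  have mem2: "X' \<in> carrier_mat K N" "R' \<in> invertibles (K - D + L)"
    using w2 unfolding sp w2e messages_def by auto
  have eW: "W' = W" and eV: "V' = V" and eQ: "sac_query K M W V R = sac_query K M W V R'"
    and eA: "sac_answer (sac_query K M W V R) X = sac_answer (sac_query K M W V R') X'"
    using eq unfolding w1e w2e by auto
  let ?n = "K - D + L"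
  let ?G = "global_coeff K W V @\<^sub>r M"
  have Vc: "V \<in> carrier_mat L D" using mem1(2) unfolding coeffs_II_def by auto
  have G: "?G \<in> carrier_mat ?n K" by (rule Gh_carrier[OF M Vc mem1(1)])
  obtain Y where Y: "Y \<in> carrier_mat K ?n" "?G * Y = 1\<^sub>m ?n" using Gh_rinv'[OF M mds mem1(2) mem1(1)] by blast
  have Rc: "R \<in> carrier_mat ?n ?n" and iR: "invertible_mat R" using mem1(4) unfolding invertibles_def by auto
  have R'c: "R' \<in> carrier_mat ?n ?n" using mem2(2) unfolding invertibles_def by auto
  have RR: "R = R'"
  proof -
    have "R = R * (?G * Y)" unfolding Y(2) using Rc by simp
    also have "\<dots> = (R * ?G) * Y" by (rule assoc_mult_mat[symmetric, OF Rc G Y(1)])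
    also have "\<dots> = (R' * ?G) * Y" using eQ unfolding sac_query_def by simp
    also have "\<dots> = R' * (?G * Y)" by (rule assoc_mult_mat[OF R'c G Y(1)])
    also have "\<dots> = R'" unfolding Y(2) using R'c by simp
    finally show ?thesis .
  qed
  obtain S where S: "S \<in> carrier_mat ?n ?n" "S * R = 1\<^sub>m ?n" using inv_char[OF Rc] iR by blast
  have GX: "?G * X = ?G * X'"
  proof -
    have "?G * X = (S * R) * (?G * X)" unfolding S(2) using G mem1(3) by simp
    also have "\<dots> = S * (R * (?G * X))" by (rule assoc_mult_mat[OF S(1) Rc mult_carrier_mat[OF G mem1(3)]])
    also have "R * (?G * X) = (R * ?G) * X" by (rule assoc_mult_mat[symmetric, OF Rc G mem1(3)])
    also have "\<dots> = (R * ?G) * X'" using eA RR unfolding sac_answer_def sac_query_def by simp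
    also have "\<dots> = R * (?G * X')" by (rule assoc_mult_mat[OF Rc G mem2(1)])
    also have "S * (R * (?G * X')) = (S * R) * (?G * X')" by (rule assoc_mult_mat[symmetric, OF S(1) Rc mult_carrier_mat[OF G mem2(1)]])
    also have "\<dots> = ?G * X'" unfolding S(2) using G mem2(1) by simp
    finally show ?thesis .
  qed
  have "global_coeff K W V * X = global_coeff K W V * X'"
    by (rule top_rows[OF gc_carrier[OF Vc mem1(1)] M mem1(3) mem2(1) GX])
  then have "demand W V X = demand W V X'"
    using demand_eq[OF Vc mem1(1) mem1(3)] demand_eq[OF Vc mem1(1) mem2(1)] by simp
  then show "(\<lambda>(W, V, X, R). demand W V X) w1 = (\<lambda>(W, V, X, R). demand W V X) w2"
    unfolding w1e w2e eW eV by simp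
qed

lemma space_facts:
  assumes "L \<le> D" "D \<le> K"
  shows "finite (supports K D \<times> (coeffs_II L D :: 'a :: {finite,field} mat set) \<times> (messages K N :: 'a mat set) \<times> (invertibles (K - D + L) :: 'a mat set))"
    "supports K D \<times> (coeffs_II L D :: 'a mat set) \<times> (messages K N :: 'a mat set) \<times> (invertibles (K - D + L) :: 'a mat set) \<noteq> {}"
proof -
  show "finite (supports K D \<times> (coeffs_II L D :: 'a :: {finite,field} mat set) \<times> (messages K N :: 'a mat set) \<times> (invertibles (K - D + L) :: 'a mat set))"
    unfolding messages_def
    by (intro finite_cartesian_product finite_supports finite_coeffs finite_invertibles finite_carrier_mat)
  have ne3: "(messages K N :: 'a mat set) \<noteq> {}" unfolding messages_def using zero_carrier_mat[of K N] by blast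
  show "supports K D \<times> (coeffs_II L D :: 'a mat set) \<times> (messages K N :: 'a mat set) \<times> (invertibles (K - D + L) :: 'a mat set) \<noteq> {}"
    using supports_ne[OF assms(2)] coeffs_ne[OF assms(1)] invertibles_ne ne3
    by (simp only: Sigma_empty_iff) blast
qed

lemma part2:
  fixes K D L N :: nat and M :: "'a :: {finite, field} mat"
  assumes "L \<le> D" and "D \<le> K" and M: "M \<in> carrier_mat (K - D) K" and mds: "mds_mat M"
  shows "\<forall>Qv Wt. measure_pmf.prob (sac_space K D L N) {w. (\<lambda>(W, V, X, R). sac_query K M W V R) w = Qv} > 0 \<longrightarrow>
              Wt \<in> supports K D \<longrightarrow>
              cprob (sac_space K D L N) {w. (\<lambda>(W, V, X, R). W) w = Wt} {w. (\<lambda>(W, V, X, R). sac_query K M W V R) w = Qv}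
                = 1 / real (K choose D)"
proof (intro allI impI)
  fix Qv Wt
  let ?S = "supports K D \<times> (coeffs_II L D :: 'a mat set) \<times> (messages K N :: 'a mat set) \<times> (invertibles (K - D + L) :: 'a mat set)"
  note sfa = space_facts[OF assms(1,2), of N, where 'a='a]
  have Om: "sac_space K D L N = pmf_of_set ?S" by (rule sac_space_eq[OF assms(1,2)])
  assume pos: "measure_pmf.prob (sac_space K D L N) {w. (\<lambda>(W, V, X, R). sac_query K M W V R) w = Qv} > 0"
    and Wt: "Wt \<in> supports K D"
  define T where "T = (\<lambda>W. Tset K D L N M W Qv)"
  have setB: "?S \<inter> {w. (\<lambda>(W, V, X, R). sac_query K M W V R) w = Qv} = Sigma (supports K D) T"
    unfolding T_def Tset_def by auto
  have setAB: "?S \<inter> ({w. (\<lambda>(W, V, X, R). W) w = Wt} \<inter> {w. (\<lambda>(W, V, X, R). sac_query K M W V R) w = Qv}) = Sigma {Wt} T"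
    unfolding T_def Tset_def using Wt by auto
  have cT: "card (T W) = card (T Wt)" if "W \<in> supports K D" for W
    unfolding T_def using card_Tset_le[OF M mds that Wt, of L N Qv] card_Tset_le[OF M mds Wt that, of L N Qv] by simp
  have finT: "finite (T W)" for W unfolding T_def by (rule finite_Tset)
  have cB: "card (Sigma (supports K D) T) = card (supports K D) * card (T Wt)"
  proof -
    have "card (Sigma (supports K D) T) = (\<Sum>W\<in>supports K D. card (T W))"
      by (rule card_SigmaI[OF finite_supports]) (use finT in auto)
    also have "\<dots> = (\<Sum>W\<in>supports K D. card (T Wt))" by (rule sum.cong) (use cT in auto)
    finally show ?thesis by simp
  qed
  have cAB: "card (Sigma {Wt} T) = card (T Wt)" by (simp add: card_SigmaI finT)
  have pB: "measure_pmf.prob (sac_space K D L N) {w. (\<lambda>(W, V, X, R). sac_query K M W V R) w = Qv}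
      = real (card (supports K D) * card (T Wt)) / real (card ?S)"
    unfolding Om measure_pmf_of_set[OF sfa(2) sfa(1)] setB cB ..
  have pAB: "measure_pmf.prob (sac_space K D L N) ({w. (\<lambda>(W, V, X, R). W) w = Wt} \<inter> {w. (\<lambda>(W, V, X, R). sac_query K M W V R) w = Qv})
      = real (card (T Wt)) / real (card ?S)"
    unfolding Om measure_pmf_of_set[OF sfa(2) sfa(1)] setAB cAB ..
  have cS: "real (card ?S) > 0" using sfa by (simp add: card_gt_0_iff)
  have ct: "real (card (T Wt)) > 0"
  proof -
    have "real (card (supports K D) * card (T Wt)) > 0" using pos cS unfolding pB by (simp add: zero_less_divide_iff)
    then show ?thesis by (simp add: zero_less_mult_iff)
  qed
  have c1: "real (card (supports K D)) > 0" using finite_supports supports_ne[OF assms(2)] by (simp add: card_gt_0_iff)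
  show "cprob (sac_space K D L N) {w. (\<lambda>(W, V, X, R). W) w = Wt} {w. (\<lambda>(W, V, X, R). sac_query K M W V R) w = Qv}
                = 1 / real (K choose D)"
    unfolding cprob_def pAB pB card_supports[symmetric] using cS ct c1 by (simp add: field_simps)
qed

lemma card_field_ge2: "CARD('a :: {finite, field}) \<ge> 2"
proof -
  have "card {0 :: 'a, 1} = 2" by simp
  moreover have "card {0 :: 'a, 1} \<le> CARD('a)" by (rule card_mono) auto
  ultimately show ?thesis by simp
qed

lemma part3:
  fixes K D L N :: nat and M :: "'a :: {finite, field} mat"
  assumes LD: "L \<le> D" and DK: "D \<le> K" and M: "M \<in> carrier_mat (K - D) K" and mds: "mds_mat M"
    and L1: "1 \<le> L" and N1: "1 \<le> N"
  shows "H (sac_space K D L N :: (nat set \<times> 'a mat \<times> 'a mat \<times> 'a mat) pmf) (\<lambda>(W, V, X, R). demand W V X) /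
         H (sac_space K D L N) (\<lambda>(W, V, X, R). sac_answer (sac_query K M W V R) X) = real L / real (K - D + L)"
proof -
  let ?n = "K - D + L"
  let ?S1 = "supports K D"
  let ?S2 = "coeffs_II L D :: 'a mat set"
  let ?S4 = "invertibles (K - D + L) :: 'a mat set"
  let ?S = "?S1 \<times> ?S2 \<times> (messages K N :: 'a mat set) \<times> ?S4"
  note sfa = space_facts[OF LD DK, of N, where 'a='a]
  have Om: "sac_space K D L N = pmf_of_set ?S" by (rule sac_space_eq[OF LD DK])
  have msg: "(messages K N :: 'a mat set) = carrier_mat K N" unfolding messages_def ..
  have neC: "(carrier_mat r N :: 'a mat set) \<noteq> {}" for r using zero_carrier_mat[of r N] by blast
  have Vc: "V \<in> carrier_mat L D" if "V \<in> ?S2" for V using that unfolding coeffs_II_def by auto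
  have uZ: "map_pmf (\<lambda>(W, V, X, R). demand W V X) (pmf_of_set ?S) = pmf_of_set (carrier_mat L N)"
  proof (rule map_pmf_of_set_uniform[OF sfa(1) sfa(2) finite_carrier_mat neC])
    fix s assume "s \<in> ?S"
    then obtain W V X R where s: "s = (W,V,X,R)" "W \<in> ?S1" "V \<in> ?S2" "X \<in> carrier_mat K N"
      unfolding msg by auto
    show "(\<lambda>(W, V, X, R). demand W V X) s \<in> carrier_mat L N"
      unfolding s(1) using demand_eq[OF Vc[OF s(3)] s(2) s(4)] mult_carrier_mat[OF gc_carrier[OF Vc[OF s(3)] s(2)] s(4)]
      by simp
  next
    fix t t' :: "'a mat" assume t: "t \<in> carrier_mat L N" and t': "t' \<in> carrier_mat L N"
    have eqs: "{s \<in> ?S. (\<lambda>(W, V, X, R). demand W V X) s = u}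
        = {s \<in> ?S1 \<times> ?S2 \<times> carrier_mat K N \<times> ?S4. (\<lambda>(W,V,X,R). global_coeff K W V * X) s = u}" for u
    proof (rule Collect_cong)
      fix s show "(s \<in> ?S \<and> (\<lambda>(W, V, X, R). demand W V X) s = u) =
          (s \<in> ?S1 \<times> ?S2 \<times> carrier_mat K N \<times> ?S4 \<and> (\<lambda>(W,V,X,R). global_coeff K W V * X) s = u)"
      proof (cases "s \<in> ?S")
        case True
        then obtain W V X R where s: "s = (W,V,X,R)" "W \<in> ?S1" "V \<in> ?S2" "X \<in> carrier_mat K N"
          unfolding msg by auto
        show ?thesis using True demand_eq[OF Vc[OF s(3)] s(2) s(4)] unfolding s(1) msg by simp
      next
        case False then show ?thesis unfolding msg by simp
      qed
    qed
    show "card {s \<in> ?S. (\<lambda>(W, V, X, R). demand W V X) s = t} \<le> card {s \<in> ?S. (\<lambda>(W, V, X, R). demand W V X) s = t'}"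
      unfolding eqs
      by (rule fiber_shift[OF finite_supports finite_coeffs finite_invertibles _ _ t t'])
         (auto intro: gc_carrier[OF Vc] gc_rinv)
  qed
  have ans: "(\<lambda>(W, V, X, R). sac_answer (sac_query K M W V R) X) = (\<lambda>(W, V, X, R). sac_query K M W V R * X)"
    unfolding sac_answer_def ..
  have uA: "map_pmf (\<lambda>(W, V, X, R). sac_query K M W V R * X) (pmf_of_set ?S) = pmf_of_set (carrier_mat ?n N)"
  proof (rule map_pmf_of_set_uniform[OF sfa(1) sfa(2) finite_carrier_mat neC])
    fix s assume "s \<in> ?S"
    then obtain W V X R where s: "s = (W,V,X,R)" "W \<in> ?S1" "V \<in> ?S2" "X \<in> carrier_mat K N" "R \<in> ?S4"
      unfolding msg by auto
    show "(\<lambda>(W, V, X, R). sac_query K M W V R * X) s \<in> carrier_mat ?n N"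
      unfolding s(1) using mult_carrier_mat[OF query_rinv(1)[OF M mds s(3) s(2) s(5)] s(4)] by simp
  next
    fix t t' :: "'a mat" assume t: "t \<in> carrier_mat ?n N" and t': "t' \<in> carrier_mat ?n N"
    show "card {s \<in> ?S. (\<lambda>(W, V, X, R). sac_query K M W V R * X) s = t} \<le> card {s \<in> ?S. (\<lambda>(W, V, X, R). sac_query K M W V R * X) s = t'}"
      unfolding msg
      by (rule fiber_shift[OF finite_supports finite_coeffs finite_invertibles _ _ t t'])
         (auto intro: query_rinv[OF M mds])
  qed
  have q: "real CARD('a) \<ge> 2" using card_field_ge2[where 'a='a] by simp
  have lq: "log 2 (real CARD('a)) > 0" using q by simp
  have HZ: "H (sac_space K D L N :: (nat set \<times> 'a mat \<times> 'a mat \<times> 'a mat) pmf) (\<lambda>(W, V, X, R). demand W V X) = real (L * N) * log 2 (real CARD('a))"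
    unfolding H_def Om uZ entropy2_pmf_of_set[OF finite_carrier_mat neC] card_carrier_mat
    by (simp add: log_nat_power)
  have HA: "H (sac_space K D L N) (\<lambda>(W, V, X, R). sac_answer (sac_query K M W V R) X) = real (?n * N) * log 2 (real CARD('a))"
    unfolding H_def Om ans uA entropy2_pmf_of_set[OF finite_carrier_mat neC] card_carrier_mat
    by (simp add: log_nat_power)
  define c where "c = real N * log 2 (real CARD('a))"
  have c0: "c \<noteq> 0" unfolding c_def using lq N1 by (metis less_numeral_extra(3) mult_eq_0_iff not_one_le_zero of_nat_eq_0_iff)
  have e1: "real (L * N) * log 2 (real CARD('a)) = real L * c" and e2: "real (?n * N) * log 2 (real CARD('a)) = real ?n * c"
    unfolding c_def by simp_all
  have "real L * c / (real ?n * c) = real L / real ?n" using c0 by (rule mult_divide_mult_cancel_right)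
  then show ?thesis unfolding HZ HA e1 e2 .
qed

theorem lemma6:
  fixes K D L N :: nat and M :: "'a :: {finite, field} mat"
  assumes "1 \<le> L" and "L \<le> D" and "D \<le> K" and "1 \<le> N"
    and "CARD('a) \<ge> K"
    and "M \<in> carrier_mat (K - D) K" and "mds_mat M"
  shows
    "let Omega = sac_space K D L N;
         Wr = (\<lambda>(W, V, X, R). W);
         Vr = (\<lambda>(W, V, X, R). V);
         Q = (\<lambda>(W, V, X, R). sac_query K M W V R);
         A = (\<lambda>(W, V, X, R). sac_answer (sac_query K M W V R) X);
         Z = (\<lambda>(W, V, X, R). demand W V X)
     in Hc Omega Z (\<lambda>w. (A w, Q w, Wr w, Vr w)) = 0
        \<and> (\<forall>Qv Wt. measure_pmf.prob Omega {w. Q w = Qv} > 0 \<longrightarrow> Wt \<in> supports K D \<longrightarrow>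
              cprob Omega {w. Wr w = Wt} {w. Q w = Qv} = 1 / real (K choose D))
        \<and> H Omega Z / H Omega A = real L / real (K - D + L)"
  unfolding Let_def
proof (intro conjI)
  show "Hc (sac_space K D L N) (\<lambda>(W, V, X, R). demand W V X)
     (\<lambda>w. ((\<lambda>(W, V, X, R). sac_answer (sac_query K M W V R) X) w, (\<lambda>(W, V, X, R). sac_query K M W V R) w,
           (\<lambda>(W, V, X, R). W) w, (\<lambda>(W, V, X, R). V) w)) = 0"
    by (rule part1[OF assms(2,3,6,7)])
  show "\<forall>Qv Wt. measure_pmf.prob (sac_space K D L N) {w. (\<lambda>(W, V, X, R). sac_query K M W V R) w = Qv} > 0 \<longrightarrow>
              Wt \<in> supports K D \<longrightarrow>
              cprob (sac_space K D L N) {w. (\<lambda>(W, V, X, R). W) w = Wt} {w. (\<lambda>(W, V, X, R). sac_query K M W V R) w = Qv}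
                = 1 / real (K choose D)"
    by (rule part2[OF assms(2,3,6,7)])
  show "H (sac_space K D L N :: (nat set \<times> 'a mat \<times> 'a mat \<times> 'a mat) pmf) (\<lambda>(W, V, X, R). demand W V X) /
         H (sac_space K D L N) (\<lambda>(W, V, X, R). sac_answer (sac_query K M W V R) X) = real L / real (K - D + L)"
    by (rule part3[OF assms(2,3,6,7,1,4)])
qed

end
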